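(* Let $\mathcal N$ be a null structure on an oriented three-dimensional (pseudo-)Riemannian manifold $(\mathcal M,g)$ which at every point is a principal null structure of $\Phi_{ab}$ of multiplicity exactly $3$. Suppose that for a generator $k^a$ of $\mathcal N$, $$k^a\left(A_{abc}-2g_{a[b}\nabla_{c]}S\right)=0,\qquad k^ak^bA_{abc}=0,\qquad k^a\nabla_aS=0.$$ Then $\mathcal N$ is co-geodetic.
   Context: Abstract index notation; $\nabla$ the Levi-Civita connection; brackets denote (skew-)symmetrisation with weight $1/2$. $R_{abd}{}^cV^d=2\nabla_{[a}\nabla_{b]}V^c$, $R_{ab}=R_{acb}{}^c$, $R=R_a{}^a$, $\Phi_{ab}=R_{ab}-\frac13Rg_{ab}$, $S=\frac1{12}R$, Cotton tensor $A_{abc}=-2\nabla_{[b}\Phi_{c]a}+2g_{a[b}\nabla_{c]}S$. $g,\nabla$ extended complex-(bi)linearly to $T^{\mathbb C}\mathcal M$. A null structure is a complex line subbundle $\mathcal N\subset T^{\mathbb C}\mathcal M$ with $g(k,k)=0$ for all sections; a generator is a nowhere-vanishing section; $\mathcal N^\perp$ its orthogonal complement. $\mathcal N$ is co-geodetic if $g(\nabla_XY,Z)=0$ for all sections $X,Y$ of $\mathcal N^\perp$, $Z$ of $\mathcal N$. Multiplicity: pick a frame $(k,\ell,n)$ with $g(k,\ell)=1$, $g(n,n)=-\frac12$, other pairings zero; $\Phi_0=\frac12\Phi_{ab}k^ak^b$, $\Phi_1=\frac12\Phi_{ab}k^an^b$, $\Phi_2=\frac12\Phi_{ab}k^a\ell^b$,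 $\Phi_3=\frac12\Phi_{ab}\ell^an^b$, $\Phi_4=\frac12\Phi_{ab}\ell^a\ell^b$; the multiplicity of $\mathcal N$ is the multiplicity of the root $z=0$ of $\Phi_0+4\Phi_1z+6\Phi_2z^2+4\Phi_3z^3+\Phi_4z^4$. Multiplicity exactly 3 means $\Phi_0=\Phi_1=\Phi_2=0\neq\Phi_3$ (equivalently $\Phi_{ab}k^b=0$ but $k_{[a}\Phi_{b]c}\neq0$). *)

theory Defs
  imports "HOL-Analysis.Analysis"
begin

text \<open>Local coordinate description of a (pseudo-)Riemannian 3-manifold:
  an open set U of real^3 (a coordinate chart), metric components g x a b.
  Abstract indices become coordinate indices of type 3.\<close>

type_synonym pt = "real^3"

definition pd :: "3 \<Rightarrow> (pt \<Rightarrow> 'b::real_normed_vector) \<Rightarrow> pt \<Rightarrow> 'b" where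
  "pd i f x = frechet_derivative f (at x) (axis i 1)"

primrec Ck_on :: "nat \<Rightarrow> pt set \<Rightarrow> (pt \<Rightarrow> 'b::real_normed_vector) \<Rightarrow> bool" where
  "Ck_on 0 U f = continuous_on U f"
| "Ck_on (Suc k) U f = (f differentiable_on U \<and> (\<forall>i. Ck_on k U (pd i f)))"

definition smooth_on :: "pt set \<Rightarrow> (pt \<Rightarrow> 'b::real_normed_vector) \<Rightarrow> bool" where
  "smooth_on U f = (\<forall>k. Ck_on k U f)"

definition smooth_field :: "pt set \<Rightarrow> (pt \<Rightarrow> 3 \<Rightarrow> 'b::real_normed_vector) \<Rightarrow> bool" where
  "smooth_field U X = (\<forall>i. smooth_on U (\<lambda>x. X x i))"

type_synonym metric = "pt \<Rightarrow> 3 \<Rightarrow> 3 \<Rightarrow> real"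

definition pseudo_riemannian :: "pt set \<Rightarrow> metric \<Rightarrow> bool" where
  "pseudo_riemannian U g \<longleftrightarrow> open U \<and>
     (\<forall>a b. smooth_on U (\<lambda>x. g x a b)) \<and>
     (\<forall>x\<in>U. \<forall>a b. g x a b = g x b a) \<and>
     (\<forall>x\<in>U. det (\<chi> i j. g x i j) \<noteq> 0)"

definition ginv :: "metric \<Rightarrow> pt \<Rightarrow> 3 \<Rightarrow> 3 \<Rightarrow> real" where
  "ginv g x a b = matrix_inv (\<chi> i j. g x i j) $ a $ b"

definition Gam :: "metric \<Rightarrow> pt \<Rightarrow> 3 \<Rightarrow> 3 \<Rightarrow> 3 \<Rightarrow> real" where
  "Gam g x c a b = (\<Sum>d\<in>UNIV. ginv g x c d *
      (pd a (\<lambda>y. g y d b) x + pd b (\<lambda>y. g y d a) x - pd d (\<lambda>y. g y a b) x)) / 2"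

text \<open>Riemann tensor R_{abd}^c with R_{abd}^c V^d = 2 nabla_[a nabla_b] V^c\<close>
definition Riem :: "metric \<Rightarrow> pt \<Rightarrow> 3 \<Rightarrow> 3 \<Rightarrow> 3 \<Rightarrow> 3 \<Rightarrow> real" where
  "Riem g x a b d c = pd a (\<lambda>y. Gam g y c b d) x - pd b (\<lambda>y. Gam g y c a d) x
     + (\<Sum>e\<in>UNIV. Gam g x c a e * Gam g x e b d - Gam g x c b e * Gam g x e a d)"

definition Ric :: "metric \<Rightarrow> pt \<Rightarrow> 3 \<Rightarrow> 3 \<Rightarrow> real" where
  "Ric g x a b = (\<Sum>c\<in>UNIV. Riem g x a c b c)"

definition Scal :: "metric \<Rightarrow> pt \<Rightarrow> real" where
  "Scal g x = (\<Sum>a\<in>UNIV. \<Sum>b\<in>UNIV. ginv g x a b * Ric g x a b)"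

definition Phi :: "metric \<Rightarrow> pt \<Rightarrow> 3 \<Rightarrow> 3 \<Rightarrow> real" where
  "Phi g x a b = Ric g x a b - Scal g x / 3 * g x a b"

definition Sc :: "metric \<Rightarrow> pt \<Rightarrow> real" where
  "Sc g x = Scal g x / 12"

definition nabla2 :: "metric \<Rightarrow> (pt \<Rightarrow> 3 \<Rightarrow> 3 \<Rightarrow> real) \<Rightarrow> pt \<Rightarrow> 3 \<Rightarrow> 3 \<Rightarrow> 3 \<Rightarrow> real" where
  "nabla2 g T x a b c = pd a (\<lambda>y. T y b c) x
     - (\<Sum>e\<in>UNIV. Gam g x e a b * T x e c) - (\<Sum>e\<in>UNIV. Gam g x e a c * T x b e)"

definition Cotton :: "metric \<Rightarrow> pt \<Rightarrow> 3 \<Rightarrow> 3 \<Rightarrow> 3 \<Rightarrow> real" where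
  "Cotton g x a b c =
     - (nabla2 g (Phi g) x b c a - nabla2 g (Phi g) x c b a)
     + (g x a b * pd c (Sc g) x - g x a c * pd b (Sc g) x)"

definition gC :: "metric \<Rightarrow> pt \<Rightarrow> (3 \<Rightarrow> complex) \<Rightarrow> (3 \<Rightarrow> complex) \<Rightarrow> complex" where
  "gC g x u v = (\<Sum>a\<in>UNIV. \<Sum>b\<in>UNIV. of_real (g x a b) * u a * v b)"

definition PhiC :: "metric \<Rightarrow> pt \<Rightarrow> (3 \<Rightarrow> complex) \<Rightarrow> (3 \<Rightarrow> complex) \<Rightarrow> complex" where
  "PhiC g x u v = (\<Sum>a\<in>UNIV. \<Sum>b\<in>UNIV. of_real (Phi g x a b) * u a * v b)"

definition nablaC :: "metric \<Rightarrow> (pt \<Rightarrow> 3 \<Rightarrow> complex) \<Rightarrow> (pt \<Rightarrow> 3 \<Rightarrow> complex) \<Rightarrow> pt \<Rightarrow> 3 \<Rightarrow> complex" where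
  "nablaC g X Y x c = (\<Sum>a\<in>UNIV. X x a * pd a (\<lambda>y. Y y c) x)
     + (\<Sum>a\<in>UNIV. \<Sum>b\<in>UNIV. of_real (Gam g x c a b) * X x a * Y x b)"

text \<open>A null structure N: a complex line subbundle N x of the complexified tangent
  spaces, spanned by a smooth nowhere-vanishing null generator k.\<close>
definition generator :: "pt set \<Rightarrow> metric \<Rightarrow> (pt \<Rightarrow> (3 \<Rightarrow> complex) set) \<Rightarrow> (pt \<Rightarrow> 3 \<Rightarrow> complex) \<Rightarrow> bool" where
  "generator U g N k \<longleftrightarrow> smooth_field U k \<and>
     (\<forall>x\<in>U. (\<exists>i. k x i \<noteq> 0) \<and> gC g x (k x) (k x) = 0 \<and> N x = {(\<lambda>i. c * k x i) | c. True})"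

definition perp :: "metric \<Rightarrow> (pt \<Rightarrow> (3 \<Rightarrow> complex) set) \<Rightarrow> pt \<Rightarrow> (3 \<Rightarrow> complex) set" where
  "perp g N x = {v. \<forall>w\<in>N x. gC g x v w = 0}"

definition co_geodetic :: "pt set \<Rightarrow> metric \<Rightarrow> (pt \<Rightarrow> (3 \<Rightarrow> complex) set) \<Rightarrow> bool" where
  "co_geodetic U g N \<longleftrightarrow>
     (\<forall>X Y Z. smooth_field U X \<and> smooth_field U Y \<and> smooth_field U Z \<and>
        (\<forall>x\<in>U. X x \<in> perp g N x \<and> Y x \<in> perp g N x \<and> Z x \<in> N x) \<longrightarrow>
        (\<forall>x\<in>U. gC g x (nablaC g X Y x) (Z x) = 0))"

text \<open>Multiplicity exactly 3 of the null direction k at x as a principal null direction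
  of Phi: in a frame (k, l, n) with g(k,l)=1, g(n,n)=-1/2, other pairings zero,
  Phi_0 = Phi_1 = Phi_2 = 0 and Phi_3 \<noteq> 0.\<close>
definition null_frame :: "metric \<Rightarrow> pt \<Rightarrow> (3 \<Rightarrow> complex) \<Rightarrow> (3 \<Rightarrow> complex) \<Rightarrow> (3 \<Rightarrow> complex) \<Rightarrow> bool" where
  "null_frame g x k l n \<longleftrightarrow> gC g x k l = 1 \<and> gC g x n n = -1/2 \<and>
     gC g x k k = 0 \<and> gC g x l l = 0 \<and> gC g x k n = 0 \<and> gC g x l n = 0"

definition mult3 :: "metric \<Rightarrow> pt \<Rightarrow> (3 \<Rightarrow> complex) \<Rightarrow> bool" where
  "mult3 g x k \<longleftrightarrow> (\<exists>l n. null_frame g x k l n \<and>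
     PhiC g x k k / 2 = 0 \<and> PhiC g x k n / 2 = 0 \<and> PhiC g x k l / 2 = 0 \<and>
     PhiC g x l n / 2 \<noteq> 0)"

end

theory Submission
  imports Defs
begin

lemma pd_cong:
  assumes "open U" "x \<in> U" "\<And>y. y \<in> U \<Longrightarrow> f y = h y"
  shows "pd i f x = pd i h x"
proof -
  have "(f has_derivative D) (at x) \<longleftrightarrow> (h has_derivative D) (at x)" for D
    using has_derivative_transform_within_open[of f D x UNIV U h]
      has_derivative_transform_within_open[of h D x UNIV U f] assms by auto
  then show ?thesis unfolding pd_def frechet_derivative_def by simp
qed

lemma pd_has:
  assumes "f differentiable (at x)"
  shows "(f has_derivative frechet_derivative f (at x)) (at x)"
  using assms frechet_derivative_works by blast

lemma pd_eqI:
  assumes "(f has_derivative D) (at x)"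
  shows "pd i f x = D (axis i 1)"
  using frechet_derivative_at[OF assms] unfolding pd_def by simp

lemma pd_const[simp]: "pd i (\<lambda>y. c) = (\<lambda>y. 0)"
  by (rule ext) (simp add: pd_def)

lemma pd_add:
  assumes "f differentiable (at x)" "h differentiable (at x)"
  shows "pd i (\<lambda>y. f y + h y) x = pd i f x + pd i h x"
  using pd_eqI[OF has_derivative_add[OF pd_has[OF assms(1)] pd_has[OF assms(2)]]]
  by (simp add: pd_def)

lemma pd_uminus:
  assumes "f differentiable (at x)"
  shows "pd i (\<lambda>y. - f y) x = - pd i f x"
  using pd_eqI[OF has_derivative_minus[OF pd_has[OF assms(1)]]]
  by (simp add: pd_def)

lemma pd_diff:
  assumes "f differentiable (at x)" "h differentiable (at x)"
  shows "pd i (\<lambda>y. f y - h y) x = pd i f x - pd i h x"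
  using pd_eqI[OF has_derivative_diff[OF pd_has[OF assms(1)] pd_has[OF assms(2)]]]
  by (simp add: pd_def)

lemma pd_mult:
  fixes f h :: "pt \<Rightarrow> 'a::real_normed_algebra"
  assumes "f differentiable (at x)" "h differentiable (at x)"
  shows "pd i (\<lambda>y. f y * h y) x = f x * pd i h x + pd i f x * h x"
  using pd_eqI[OF has_derivative_mult[OF pd_has[OF assms(1)] pd_has[OF assms(2)]]]
  by (simp add: pd_def)

lemma pd_sum:
  assumes "\<And>j. j \<in> J \<Longrightarrow> f j differentiable (at x)"
  shows "pd i (\<lambda>y. \<Sum>j\<in>J. f j y) x = (\<Sum>j\<in>J. pd i (f j) x)"
proof -
  have "((\<lambda>y. \<Sum>j\<in>J. f j y) has_derivative (\<lambda>v. \<Sum>j\<in>J. frechet_derivative (f j) (at x) v)) (at x)"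
    by (rule has_derivative_sum) (use assms pd_has in blast)
  from pd_eqI[OF this] show ?thesis by (simp add: pd_def)
qed

lemma pd_of_real:
  assumes "f differentiable (at x)"
  shows "pd i (\<lambda>y. of_real (f y) :: 'a::real_normed_algebra_1) x = of_real (pd i f x)"
  using pd_eqI[OF has_derivative_of_real[OF pd_has[OF assms(1)]]]
  by (simp add: pd_def)

lemma pd_inverse:
  fixes f :: "pt \<Rightarrow> real"
  assumes "f differentiable (at x)" "f x \<noteq> 0"
  shows "pd i (\<lambda>y. inverse (f y)) x = - (inverse (f x) * pd i f x * inverse (f x))"
  using pd_eqI[OF Deriv.has_derivative_inverse[OF assms(2) pd_has[OF assms(1)]]]
  by (simp add: pd_def)

lemma pd_zero:
  assumes "open U" "x \<in> U" "\<And>y. y \<in> U \<Longrightarrow> f y = 0"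
  shows "pd i f x = 0"
  using pd_cong[OF assms(1,2), of f "\<lambda>y. 0"] assms by simp

lemma diff_at:
  assumes "open U" "f differentiable_on U" "x \<in> U"
  shows "f differentiable (at x)"
  using assms differentiable_on_eq_differentiable_at by blast

lemma Ck_cong:
  assumes "open U" "\<And>y. y \<in> U \<Longrightarrow> f y = h y" "Ck_on k U f"
  shows "Ck_on k U h"
  using assms(2,3)
proof (induction k arbitrary: f h)
  case 0
  then show ?case using continuous_on_cong by force
next
  case (Suc k)
  have d: "h differentiable_on U"
    unfolding differentiable_on_def
  proof
    fix x assume x: "x \<in> U"
    then have "f differentiable (at x within U)" using Suc.prems by (auto simp: differentiable_on_def)
    then show "h differentiable (at x within U)"
      by (rule differentiable_transform_within[of _ _ _ 1]) (use x Suc.prems in auto)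
  qed
  have "Ck_on k U (pd i h)" for i
  proof (rule Suc.IH[of "pd i f" "pd i h"])
    show "pd i f y = pd i h y" if "y \<in> U" for y using pd_cong[OF assms(1) that Suc.prems(1)] .
    show "Ck_on k U (pd i f)" using Suc.prems by simp
  qed
  then show ?case using d by simp
qed

lemma Ck_Suc_D: "Ck_on (Suc k) U f \<Longrightarrow> Ck_on k U f"
proof (induction k arbitrary: f)
  case 0
  then show ?case by (simp add: differentiable_imp_continuous_on)
next
  case (Suc k)
  then show ?case by simp
qed

lemma Ck_le: "Ck_on m U f \<Longrightarrow> k \<le> m \<Longrightarrow> Ck_on k U f"
proof (induction m)
  case 0 then show ?case by simp
next
  case (Suc m) then show ?case using Ck_Suc_D le_Suc_eq by metis
qed

lemma Ck_const: "Ck_on k U (\<lambda>y. c)"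
  by (induction k arbitrary: c) auto

lemma Ck_add:
  assumes "open U" shows "Ck_on k U f \<Longrightarrow> Ck_on k U h \<Longrightarrow> Ck_on k U (\<lambda>y. f y + h y)"
proof (induction k arbitrary: f h)
  case 0 then show ?case by (auto intro: continuous_on_add)
next
  case (Suc k)
  have "Ck_on k U (pd i (\<lambda>y. f y + h y))" for i
  proof (rule Ck_cong[OF assms])
    show "Ck_on k U (\<lambda>y. pd i f y + pd i h y)" using Suc by simp
    show "pd i f y + pd i h y = pd i (\<lambda>y. f y + h y) y" if "y \<in> U" for y
    proof -
      have "f differentiable (at y)" "h differentiable (at y)"
        using diff_at[OF assms] Suc.prems that by auto
      then show ?thesis by (simp add: pd_add)
    qed
  qed
  then show ?case using Suc.prems by (auto intro: differentiable_on_add)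
qed

lemma Ck_uminus:
  assumes "open U" shows "Ck_on k U f \<Longrightarrow> Ck_on k U (\<lambda>y. - f y)"
proof (induction k arbitrary: f)
  case 0 then show ?case by (auto intro: continuous_on_minus)
next
  case (Suc k)
  have "Ck_on k U (pd i (\<lambda>y. - f y))" for i
  proof (rule Ck_cong[OF assms])
    show "Ck_on k U (\<lambda>y. - pd i f y)" using Suc by simp
    show "- pd i f y = pd i (\<lambda>y. - f y) y" if "y \<in> U" for y
    proof -
      have "f differentiable (at y)"
        using diff_at[OF assms] Suc.prems that by auto
      then show ?thesis by (simp add: pd_uminus)
    qed
  qed
  then show ?case using Suc.prems by (auto intro: differentiable_on_minus)
qed

lemma Ck_diff:
  assumes "open U" "Ck_on k U f" "Ck_on k U h" shows "Ck_on k U (\<lambda>y. f y - h y)"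
  using Ck_add[OF assms(1) assms(2) Ck_uminus[OF assms(1,3)]] by simp

lemma Ck_mult:
  fixes f h :: "pt \<Rightarrow> 'a::real_normed_algebra"
  assumes "open U" shows "Ck_on k U f \<Longrightarrow> Ck_on k U h \<Longrightarrow> Ck_on k U (\<lambda>y. f y * h y)"
proof (induction k arbitrary: f h)
  case 0 then show ?case by (auto intro: continuous_on_mult)
next
  case (Suc k)
  have "Ck_on k U (pd i (\<lambda>y. f y * h y))" for i
  proof (rule Ck_cong[OF assms])
    show "Ck_on k U (\<lambda>y. f y * pd i h y + pd i f y * h y)"
    proof (rule Ck_add[OF assms])
      have f: "Ck_on k U f" using Ck_Suc_D[OF Suc.prems(1)] .
      have h: "Ck_on k U h" using Ck_Suc_D[OF Suc.prems(2)] .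
      show "Ck_on k U (\<lambda>y. f y * pd i h y)" using Suc.IH[OF f] Suc.prems(2) by simp
      show "Ck_on k U (\<lambda>y. pd i f y * h y)" using Suc.IH[OF _ h] Suc.prems(1) by simp
    qed
    show "f y * pd i h y + pd i f y * h y = pd i (\<lambda>y. f y * h y) y" if "y \<in> U" for y
    proof -
      have "f differentiable (at y)" "h differentiable (at y)"
        using diff_at[OF assms] Suc.prems that by auto
      then show ?thesis by (simp add: pd_mult)
    qed
  qed
  then show ?case using Suc.prems by (auto intro: differentiable_on_mult)
qed

lemma Ck_sum:
  assumes "open U" "finite J" "\<And>j. j \<in> J \<Longrightarrow> Ck_on k U (f j)"
  shows "Ck_on k U (\<lambda>y. \<Sum>j\<in>J. f j y)"
  using assms(2,3)
  by (induction J rule: finite_induct) (auto intro: Ck_const Ck_add[OF assms(1)])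

lemma Ck_prod:
  fixes f :: "'i \<Rightarrow> pt \<Rightarrow> real"
  assumes "open U" "finite J" "\<And>j. j \<in> J \<Longrightarrow> Ck_on k U (f j)"
  shows "Ck_on k U (\<lambda>y. \<Prod>j\<in>J. f j y)"
  using assms(2,3)
  by (induction J rule: finite_induct) (auto intro: Ck_const Ck_mult[OF assms(1)])

lemma Ck_inverse:
  fixes f :: "pt \<Rightarrow> real"
  assumes "open U" "\<And>y. y \<in> U \<Longrightarrow> f y \<noteq> 0"
  shows "Ck_on k U f \<Longrightarrow> Ck_on k U (\<lambda>y. inverse (f y))"
proof (induction k)
  case 0 then show ?case using assms by (auto intro!: continuous_on_inverse)
next
  case (Suc k)
  have "Ck_on k U (pd i (\<lambda>y. inverse (f y)))" for i
  proof (rule Ck_cong[OF assms(1)])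
    have "Ck_on k U (\<lambda>y. inverse (f y))" using Suc Ck_Suc_D by blast
    then show "Ck_on k U (\<lambda>y. - (inverse (f y) * pd i f y * inverse (f y)))"
      by (intro Ck_uminus[OF assms(1)] Ck_mult[OF assms(1)] \<open>Ck_on k U (\<lambda>y. inverse (f y))\<close>)
        (use Suc.prems in simp)
    show "- (inverse (f y) * pd i f y * inverse (f y)) = pd i (\<lambda>y. inverse (f y)) y" if "y \<in> U" for y
    proof -
      have "f differentiable (at y)"
        using diff_at[OF assms(1)] Suc.prems that by auto
      then show ?thesis using pd_inverse assms(2) that by simp
    qed
  qed
  then show ?case using Suc.prems assms by (auto intro!: differentiable_on_inverse)
qed

lemma line_deriv:
  fixes f :: "pt \<Rightarrow> real"
  assumes "f differentiable (at (p + t *\<^sub>R w))"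
  shows "((\<lambda>s. f (p + s *\<^sub>R w)) has_real_derivative frechet_derivative f (at (p + t *\<^sub>R w)) w) (at t)"
proof -
  let ?D = "frechet_derivative f (at (p + t *\<^sub>R w))"
  have g: "((\<lambda>s. p + s *\<^sub>R w) has_derivative (\<lambda>s. s *\<^sub>R w)) (at t)"
    by (auto intro!: derivative_eq_intros)
  have fd: "(f has_derivative ?D) (at (p + t *\<^sub>R w))" using assms frechet_derivative_works by blast
  have "((\<lambda>s. f (p + s *\<^sub>R w)) has_derivative (?D \<circ> (\<lambda>s. s *\<^sub>R w))) (at t)"
    using diff_chain_at[OF g fd] by (simp add: o_def)
  moreover have "?D \<circ> (\<lambda>s. s *\<^sub>R w) = (*) (?D w)"
    using linear_frechet_derivative[OF assms] by (auto simp: o_def linear_cmul mult.commute)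
  ultimately show ?thesis by (simp add: has_field_derivative_def)
qed

lemma line_pd:
  fixes f :: "pt \<Rightarrow> real"
  assumes "f differentiable (at (p + t *\<^sub>R axis i 1))"
  shows "((\<lambda>s. f (p + s *\<^sub>R axis i 1)) has_real_derivative pd i f (p + t *\<^sub>R axis i 1)) (at t)"
  using line_deriv[OF assms] unfolding pd_def .

lemma schwarz_aux:
  fixes f :: "pt \<Rightarrow> real"
  assumes U: "open U" and f: "Ck_on 2 U f" and h: "h > 0" and sub: "cball x (2*h) \<subseteq> U"
  shows "\<exists>p. dist p x \<le> 2*h \<and>
     f (x + h *\<^sub>R axis a 1 + h *\<^sub>R axis b 1) - f (x + h *\<^sub>R axis a 1)
       - f (x + h *\<^sub>R axis b 1) + f x = h\<^sup>2 * pd b (pd a f) p"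
proof -
  define u where "u = axis a (1::real)"
  define v where "v = axis b (1::real)"
  have nu: "norm u = 1" "norm v = 1" by (simp_all add: u_def v_def)
  have inU: "x + s *\<^sub>R u + t *\<^sub>R v \<in> U" if "0 \<le> s" "s \<le> h" "0 \<le> t" "t \<le> h" for s t
  proof -
    have "norm (s *\<^sub>R u + t *\<^sub>R v) \<le> norm (s *\<^sub>R u) + norm (t *\<^sub>R v)" by (rule norm_triangle_ineq)
    also have "\<dots> \<le> 2*h" using that nu by simp
    finally have "dist (x + s *\<^sub>R u + t *\<^sub>R v) x \<le> 2*h" by (simp add: dist_norm add.assoc)
    then show ?thesis using sub by (auto simp: dist_commute)
  qed
  have fd: "f differentiable (at y)" if "y \<in> U" for y
    using f diff_at[OF U _ that] by (auto simp add: numeral_2_eq_2)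
  have fad: "pd a f differentiable (at y)" if "y \<in> U" for y
    using f diff_at[OF U _ that] by (auto simp add: numeral_2_eq_2)
  define \<phi> where "\<phi> s = f ((x + h *\<^sub>R v) + s *\<^sub>R u) - f (x + s *\<^sub>R u)" for s
  have "\<exists>z. 0 < z \<and> z < h \<and> \<phi> h - \<phi> 0 = (h - 0) * (pd a f ((x + h *\<^sub>R v) + z *\<^sub>R u) - pd a f (x + z *\<^sub>R u))"
  proof (rule MVT2[OF h])
    fix s assume s: "0 \<le> s" "s \<le> h"
    have i1: "(x + h *\<^sub>R v) + s *\<^sub>R u \<in> U" using inU[OF s, of h] h by (simp add: ac_simps)
    have i2: "x + s *\<^sub>R u \<in> U" using inU[OF s, of 0] h by simp
    show "(\<phi> has_real_derivative pd a f ((x + h *\<^sub>R v) + s *\<^sub>R u) - pd a f (x + s *\<^sub>R u)) (at s)"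
      unfolding \<phi>_def u_def
      by (intro DERIV_diff line_pd) (use fd i1 i2 in \<open>auto simp: u_def\<close>)
  qed
  then obtain \<xi> where \<xi>: "0 < \<xi>" "\<xi> < h"
    and e1: "\<phi> h - \<phi> 0 = h * (pd a f ((x + \<xi> *\<^sub>R u) + h *\<^sub>R v) - pd a f ((x + \<xi> *\<^sub>R u) + 0 *\<^sub>R v))"
    by (auto simp: ac_simps)
  have "\<exists>z. 0 < z \<and> z < h \<and> pd a f ((x + \<xi> *\<^sub>R u) + h *\<^sub>R v) - pd a f ((x + \<xi> *\<^sub>R u) + 0 *\<^sub>R v)
      = (h - 0) * pd b (pd a f) ((x + \<xi> *\<^sub>R u) + z *\<^sub>R v)"
  proof (rule MVT2[OF h])
    fix t assume t: "0 \<le> t" "t \<le> h"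
    have i1: "(x + \<xi> *\<^sub>R u) + t *\<^sub>R v \<in> U" using inU[of \<xi> t] t \<xi> by simp
    show "((\<lambda>t. pd a f ((x + \<xi> *\<^sub>R u) + t *\<^sub>R v)) has_real_derivative pd b (pd a f) ((x + \<xi> *\<^sub>R u) + t *\<^sub>R v)) (at t)"
      unfolding v_def by (rule line_pd) (use fad i1 in \<open>auto simp: v_def\<close>)
  qed
  then obtain \<eta> where \<eta>: "0 < \<eta>" "\<eta> < h"
    and e2: "pd a f ((x + \<xi> *\<^sub>R u) + h *\<^sub>R v) - pd a f ((x + \<xi> *\<^sub>R u) + 0 *\<^sub>R v)
      = h * pd b (pd a f) ((x + \<xi> *\<^sub>R u) + \<eta> *\<^sub>R v)"
    by auto
  define p where "p = (x + \<xi> *\<^sub>R u) + \<eta> *\<^sub>R v"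
  have "norm (\<xi> *\<^sub>R u + \<eta> *\<^sub>R v) \<le> norm (\<xi> *\<^sub>R u) + norm (\<eta> *\<^sub>R v)" by (rule norm_triangle_ineq)
  also have "\<dots> \<le> 2*h" using \<xi> \<eta> nu by simp
  finally have dp: "dist p x \<le> 2*h" by (simp add: p_def dist_norm add.assoc)
  have "\<phi> h - \<phi> 0 = h\<^sup>2 * pd b (pd a f) p" using e1 e2 by (simp add: p_def power2_eq_square)
  moreover have "\<phi> h - \<phi> 0 = f (x + h *\<^sub>R u + h *\<^sub>R v) - f (x + h *\<^sub>R u) - f (x + h *\<^sub>R v) + f x"
    by (simp add: \<phi>_def ac_simps)
  ultimately show ?thesis using dp unfolding u_def v_def by metis
qed

lemma schwarz:
  fixes f :: "pt \<Rightarrow> real"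
  assumes U: "open U" and f: "Ck_on 2 U f" and x: "x \<in> U"
  shows "pd a (pd b f) x = pd b (pd a f) x"
proof (rule ccontr)
  let ?F1 = "pd b (pd a f)" and ?F2 = "pd a (pd b f)"
  assume ne: "?F2 x \<noteq> ?F1 x"
  define e where "e = \<bar>?F1 x - ?F2 x\<bar> / 2"
  have e: "e > 0" using ne by (simp add: e_def)
  have c1: "continuous_on U ?F1" and c2: "continuous_on U ?F2" using f by (simp_all add: numeral_2_eq_2)
  obtain d1 where d1: "d1 > 0" "\<forall>y\<in>U. dist y x < d1 \<longrightarrow> dist (?F1 y) (?F1 x) < e"
    using c1 x e unfolding continuous_on_iff by blast
  obtain d2 where d2: "d2 > 0" "\<forall>y\<in>U. dist y x < d2 \<longrightarrow> dist (?F2 y) (?F2 x) < e"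
    using c2 x e unfolding continuous_on_iff by blast
  obtain r where r: "r > 0" "cball x r \<subseteq> U" using open_contains_cball U x by blast
  define h where "h = min r (min d1 d2) / 3"
  have h: "h > 0" using r d1 d2 by (simp add: h_def)
  have sub: "cball x (2*h) \<subseteq> U" using r h by (auto simp: h_def)
  obtain p where p: "dist p x \<le> 2*h"
     "f (x + h *\<^sub>R axis a 1 + h *\<^sub>R axis b 1) - f (x + h *\<^sub>R axis a 1)
       - f (x + h *\<^sub>R axis b 1) + f x = h\<^sup>2 * ?F1 p"
    using schwarz_aux[OF U f h sub] by blast
  obtain q where q: "dist q x \<le> 2*h"
     "f (x + h *\<^sub>R axis b 1 + h *\<^sub>R axis a 1) - f (x + h *\<^sub>R axis b 1)
       - f (x + h *\<^sub>R axis a 1) + f x = h\<^sup>2 * ?F2 q"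
    using schwarz_aux[OF U f h sub] by blast
  have "h\<^sup>2 * ?F1 p = h\<^sup>2 * ?F2 q" using p(2) q(2) by (simp add: algebra_simps)
  then have eq: "?F1 p = ?F2 q" using h by simp
  have pU: "p \<in> U" "q \<in> U" using p(1) q(1) sub by (auto simp: dist_commute)
  have "dist p x < d1" "dist q x < d2" using p(1) q(1) h r d1 d2 by (auto simp: h_def)
  then have "dist (?F1 p) (?F1 x) < e" "dist (?F2 q) (?F2 x) < e" using d1 d2 pU by auto
  then have "\<bar>?F1 x - ?F2 x\<bar> < 2 * e" using eq by (simp add: dist_real_def)
  then show False by (simp add: e_def)
qed

lemma smooth_const: "open U \<Longrightarrow> smooth_on U (\<lambda>y. c)"
  by (simp add: smooth_on_def Ck_const)
lemma smooth_add: "open U \<Longrightarrow> smooth_on U f \<Longrightarrow> smooth_on U h \<Longrightarrow> smooth_on U (\<lambda>y. f y + h y)"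
  by (simp add: smooth_on_def Ck_add)
lemma smooth_diff: "open U \<Longrightarrow> smooth_on U f \<Longrightarrow> smooth_on U h \<Longrightarrow> smooth_on U (\<lambda>y. f y - h y)"
  by (simp add: smooth_on_def Ck_diff)
lemma smooth_uminus: "open U \<Longrightarrow> smooth_on U f \<Longrightarrow> smooth_on U (\<lambda>y. - f y)"
  by (simp add: smooth_on_def Ck_uminus)
lemma smooth_mult: "open U \<Longrightarrow> smooth_on U f \<Longrightarrow> smooth_on U h \<Longrightarrow>
    smooth_on U (\<lambda>y. (f y :: 'a::real_normed_algebra) * h y)"
  by (simp add: smooth_on_def Ck_mult)
lemma smooth_sum: "open U \<Longrightarrow> finite J \<Longrightarrow> (\<And>j. smooth_on U (f j)) \<Longrightarrow> smooth_on U (\<lambda>y. \<Sum>j\<in>J. f j y)"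
  by (simp add: smooth_on_def Ck_sum)
lemma smooth_pd: "open U \<Longrightarrow> smooth_on U f \<Longrightarrow> smooth_on U (pd i f)"
  unfolding smooth_on_def by (metis Ck_on.simps(2))
lemma smooth_divc: "open U \<Longrightarrow> smooth_on U f \<Longrightarrow> smooth_on U (\<lambda>y. (f y :: real) / c)"
  using smooth_mult[of U f "\<lambda>y. 1/c"] smooth_const[of U "1/c"] by simp
lemma smooth_of_real: "open U \<Longrightarrow> smooth_on U f \<Longrightarrow> smooth_on U (\<lambda>y. of_real (f y) :: complex)"
proof -
  assume U: "open U" and f: "smooth_on U f"
  have "Ck_on k U (\<lambda>y. of_real (f y) :: complex)" if "Ck_on k U f" for k
    using that
  proof (induction k arbitrary: f)
    case 0 then show ?case by (auto intro: continuous_on_of_real)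
  next
    case (Suc k)
    have "Ck_on k U (pd i (\<lambda>y. of_real (f y) :: complex))" for i
    proof (rule Ck_cong[OF U])
      show "Ck_on k U (\<lambda>y. of_real (pd i f y) :: complex)" using Suc by simp
      show "of_real (pd i f y) = pd i (\<lambda>y. of_real (f y) :: complex) y" if "y \<in> U" for y
      proof -
        have "f differentiable (at y)" using diff_at[OF U] Suc.prems that by auto
        then show ?thesis by (simp add: pd_of_real)
      qed
    qed
    moreover have "(\<lambda>y. of_real (f y) :: complex) differentiable_on U"
    proof -
      have "f differentiable_on U" using Suc.prems by simp
      then show ?thesis unfolding differentiable_on_def differentiable_def
        by (fastforce intro: has_derivative_of_real)
    qed
    ultimately show ?case by simp
  qed
  then show ?thesis using f by (simp add: smooth_on_def)
qed
lemma smooth_cong: "open U \<Longrightarrow> (\<And>y. y \<in> U \<Longrightarrow> f y = h y) \<Longrightarrow> smooth_on U f \<Longrightarrow> smooth_on U h"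
  unfolding smooth_on_def using Ck_cong by blast
lemma smooth_inverse: "open U \<Longrightarrow> (\<And>y. y \<in> U \<Longrightarrow> f y \<noteq> 0) \<Longrightarrow> smooth_on U f \<Longrightarrow>
    smooth_on U (\<lambda>y. inverse (f y :: real))"
  unfolding smooth_on_def using Ck_inverse by blast

lemma smooth_diff_at: "open U \<Longrightarrow> smooth_on U f \<Longrightarrow> x \<in> U \<Longrightarrow> f differentiable (at x)"
  unfolding smooth_on_def using diff_at by (metis Ck_on.simps(2))

lemmas smooth_intros = smooth_const smooth_add smooth_diff smooth_uminus smooth_mult smooth_sum
  smooth_pd smooth_divc smooth_of_real

lemma smooth_det3:
  assumes U: "open U" and F: "\<And>i j. smooth_on U (\<lambda>y. F y $ i $ j)"
  shows "smooth_on U (\<lambda>y. det (F y :: real^3^3))"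
  unfolding det_3 by (intro smooth_intros[OF U] F)

section \<open>The inverse metric\<close>

definition Gm :: "metric \<Rightarrow> pt \<Rightarrow> real^3^3" where
  "Gm g y = (\<chi> i j. g y i j)"

lemma ginv_Gm: "ginv g y a b = matrix_inv (Gm g y) $ a $ b"
  unfolding ginv_def Gm_def by simp

lemma ginv_props:
  assumes "det (Gm g y) \<noteq> 0"
  shows "Gm g y ** matrix_inv (Gm g y) = mat 1" "matrix_inv (Gm g y) ** Gm g y = mat 1"
proof -
  have "invertible (Gm g y)" using assms invertible_det_nz by blast
  then have "\<exists>A'. Gm g y ** A' = mat 1 \<and> A' ** Gm g y = mat 1" unfolding invertible_def .
  then have "Gm g y ** matrix_inv (Gm g y) = mat 1 \<and> matrix_inv (Gm g y) ** Gm g y = mat 1"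
    unfolding matrix_inv_def by (rule someI_ex)
  then show "Gm g y ** matrix_inv (Gm g y) = mat 1" "matrix_inv (Gm g y) ** Gm g y = mat 1" by auto
qed

context
  fixes U g assumes PR: "pseudo_riemannian U g"
begin

lemma U_open: "open U" using PR by (simp add: pseudo_riemannian_def)
lemma g_sym: "y \<in> U \<Longrightarrow> g y a b = g y b a" using PR by (simp add: pseudo_riemannian_def)
lemma g_smooth: "smooth_on U (\<lambda>y. g y a b)" using PR by (simp add: pseudo_riemannian_def)
lemma g_det: "y \<in> U \<Longrightarrow> det (Gm g y) \<noteq> 0" using PR by (simp add: pseudo_riemannian_def Gm_def)

lemma ginv_right: "y \<in> U \<Longrightarrow> (\<Sum>b\<in>UNIV. g y a b * ginv g y b c) = (if a = c then 1 else 0)"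
proof -
  assume y: "y \<in> U"
  have "(Gm g y ** matrix_inv (Gm g y)) $ a $ c = mat 1 $ a $ c" using ginv_props(1)[OF g_det[OF y]] by simp
  then show ?thesis unfolding matrix_matrix_mult_def ginv_Gm mat_def by (simp add: Gm_def)
qed

lemma ginv_left: "y \<in> U \<Longrightarrow> (\<Sum>b\<in>UNIV. ginv g y a b * g y b c) = (if a = c then 1 else 0)"
proof -
  assume y: "y \<in> U"
  have "(matrix_inv (Gm g y) ** Gm g y) $ a $ c = mat 1 $ a $ c" using ginv_props(2)[OF g_det[OF y]] by simp
  then show ?thesis unfolding matrix_matrix_mult_def ginv_Gm mat_def by (simp add: Gm_def)
qed

lemma ginv_sym: "y \<in> U \<Longrightarrow> ginv g y a b = ginv g y b a"
proof -
  assume y: "y \<in> U"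
  let ?G = "Gm g y" and ?M = "matrix_inv (Gm g y)"
  have GT: "transpose ?G = ?G" using g_sym[OF y] by (simp add: Gm_def transpose_def vec_eq_iff)
  have "transpose ?M ** ?G = mat 1"
    using arg_cong[OF ginv_props(1)[OF g_det[OF y]], of transpose] by (simp add: matrix_transpose_mul GT)
  then have "transpose ?M = transpose ?M ** (?G ** ?M)" using ginv_props(1)[OF g_det[OF y]] by simp
  also have "\<dots> = ?M" using \<open>transpose ?M ** ?G = mat 1\<close> by (simp add: matrix_mul_assoc)
  finally have "transpose ?M $ a $ b = ?M $ a $ b" by simp
  then show ?thesis unfolding ginv_Gm transpose_def by simp
qed

lemma ginv_cramer:
  assumes y: "y \<in> U"
  shows "ginv g y k j = det (\<chi> i j'. if j' = k then (mat 1 :: real^3^3) $ i $ j else Gm g y $ i $ j') / det (Gm g y)"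
proof -
  let ?G = "Gm g y" and ?M = "matrix_inv (Gm g y)"
  define xx :: "real^3" where "xx = (\<chi> k. ?M $ k $ j)"
  define bb :: "real^3" where "bb = (\<chi> i. (mat 1 :: real^3^3) $ i $ j)"
  have "?G *v xx = bb"
    using ginv_props(1)[OF g_det[OF y]]
    by (simp add: xx_def bb_def vec_eq_iff matrix_vector_mult_def matrix_matrix_mult_def)
  then have "xx = (\<chi> k. det(\<chi> i j. if j=k then bb$i else ?G$i$j) / det ?G)"
    using cramer[OF g_det[OF y]] by blast
  then have "xx $ k = det(\<chi> i j'. if j'=k then (mat 1::real^3^3) $ i $ j else ?G$i$j') / det ?G"
    unfolding bb_def vec_lambda_beta by simp
  then show ?thesis by (simp add: xx_def bb_def ginv_Gm)
qed

lemma ginv_smooth: "smooth_on U (\<lambda>y. ginv g y a b)"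
proof (rule smooth_cong[OF U_open])
  show "det (\<chi> i j'. if j' = a then (mat 1 :: real^3^3) $ i $ b else Gm g y $ i $ j') * inverse (det (Gm g y))
     = ginv g y a b" if "y \<in> U" for y
    using ginv_cramer[OF that] by (simp add: field_simps)
  show "smooth_on U (\<lambda>y. det (\<chi> i j'. if j' = a then (mat 1 :: real^3^3) $ i $ b else Gm g y $ i $ j')
      * inverse (det (Gm g y)))"
  proof (intro smooth_mult[OF U_open] smooth_inverse[OF U_open] smooth_det3[OF U_open])
    show "det (Gm g y) \<noteq> 0" if "y \<in> U" for y using g_det[OF that] .
    show "smooth_on U (\<lambda>y. Gm g y $ i $ j)" for i j using g_smooth by (simp add: Gm_def)
    show "smooth_on U (\<lambda>y. (\<chi> i j'. if j' = a then (mat 1 :: real^3^3) $ i $ b else Gm g y $ i $ j') $ i $ j)" for i j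
      by (cases "j = a") (simp_all add: Gm_def g_smooth smooth_const[OF U_open])
  qed
qed

lemma Gam_smooth: "smooth_on U (\<lambda>y. Gam g y c a b)"
  unfolding Gam_def by (intro smooth_intros[OF U_open] ginv_smooth g_smooth) simp_all

lemma Riem_smooth: "smooth_on U (\<lambda>y. Riem g y a b d c)"
  unfolding Riem_def by (intro smooth_intros[OF U_open] Gam_smooth) simp_all

lemma Ric_smooth: "smooth_on U (\<lambda>y. Ric g y a b)"
  unfolding Ric_def by (intro smooth_intros[OF U_open] Riem_smooth) simp_all

lemma Scal_smooth: "smooth_on U (\<lambda>y. Scal g y)"
  unfolding Scal_def by (intro smooth_intros[OF U_open] Ric_smooth ginv_smooth) simp_all

lemma Phi_smooth: "smooth_on U (\<lambda>y. Phi g y a b)"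
  unfolding Phi_def by (intro smooth_intros[OF U_open] Ric_smooth Scal_smooth g_smooth)

end

lemma trace_swap_aux:
  fixes M A B :: "3 \<Rightarrow> 3 \<Rightarrow> real"
  shows "(\<Sum>c\<in>UNIV. \<Sum>d\<in>UNIV. \<Sum>e\<in>UNIV. \<Sum>f\<in>UNIV. M c e * A e f * M f d * B d c)
       = (\<Sum>c\<in>UNIV. \<Sum>d\<in>UNIV. \<Sum>e\<in>UNIV. \<Sum>f\<in>UNIV. M c e * B e f * M f d * A d c)"
proof -
  have "(\<Sum>c\<in>UNIV. \<Sum>d\<in>UNIV. \<Sum>e\<in>UNIV. \<Sum>f\<in>UNIV. M c e * B e f * M f d * A d c)
    = (\<Sum>(c,d,e,f)\<in>UNIV. M c e * B e f * M f d * A d c)"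
    by (simp add: sum.cartesian_product UNIV_Times_UNIV[symmetric] del: UNIV_Times_UNIV)
  also have "\<dots> = (\<Sum>(c,d,e,f)\<in>UNIV. M f d * B d c * M c e * A e f)"
    by (rule sum.reindex_bij_witness[where i="\<lambda>(c,d,e,f). (f,e,d,c)" and j="\<lambda>(c,d,e,f). (f,e,d,c)"]) auto
  also have "\<dots> = (\<Sum>c\<in>UNIV. \<Sum>d\<in>UNIV. \<Sum>e\<in>UNIV. \<Sum>f\<in>UNIV. M f d * B d c * M c e * A e f)"
    by (simp add: sum.cartesian_product UNIV_Times_UNIV[symmetric] del: UNIV_Times_UNIV)
  finally show ?thesis by (simp add: mult_ac)
qed

context
  fixes U g assumes PR: "pseudo_riemannian U g"
begin

lemma dg_sym: "y \<in> U \<Longrightarrow> pd c (\<lambda>z. g z a b) y = pd c (\<lambda>z. g z b a) y"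
  by (rule pd_cong[OF U_open[OF PR]]) (auto intro: g_sym[OF PR])

lemma g_diff: "y \<in> U \<Longrightarrow> (\<lambda>z. g z a b) differentiable (at y)"
  using smooth_diff_at[OF U_open[OF PR] g_smooth[OF PR]] .
lemma dg_diff: "y \<in> U \<Longrightarrow> pd c (\<lambda>z. g z a b) differentiable (at y)"
  using smooth_diff_at[OF U_open[OF PR] smooth_pd[OF U_open[OF PR] g_smooth[OF PR]]] .
lemma ginv_diff: "y \<in> U \<Longrightarrow> (\<lambda>z. ginv g z a b) differentiable (at y)"
  using smooth_diff_at[OF U_open[OF PR] ginv_smooth[OF PR]] .
lemma Gam_diff: "y \<in> U \<Longrightarrow> (\<lambda>z. Gam g z c a b) differentiable (at y)"
  using smooth_diff_at[OF U_open[OF PR] Gam_smooth[OF PR]] .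
lemma Phi_diff: "y \<in> U \<Longrightarrow> (\<lambda>z. Phi g z a b) differentiable (at y)"
  using smooth_diff_at[OF U_open[OF PR] Phi_smooth[OF PR]] .

lemma Gam_sym: "y \<in> U \<Longrightarrow> Gam g y c a b = Gam g y c b a"
proof -
  assume y: "y \<in> U"
  have "pd d (\<lambda>z. g z b a) y = pd d (\<lambda>z. g z a b) y" for d using dg_sym[OF y] by simp
  then show ?thesis unfolding Gam_def by (simp add: add.commute)
qed

lemma gam_lower: "y \<in> U \<Longrightarrow> (\<Sum>e\<in>UNIV. Gam g y e c a * g y e b)
   = (pd c (\<lambda>z. g z b a) y + pd a (\<lambda>z. g z b c) y - pd b (\<lambda>z. g z c a) y) / 2"
proof -
  assume y: "y \<in> U"
  define X where "X d = pd c (\<lambda>z. g z d a) y + pd a (\<lambda>z. g z d c) y - pd d (\<lambda>z. g z c a) y" for d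
  have "(\<Sum>e\<in>UNIV. Gam g y e c a * g y e b) = (\<Sum>e\<in>UNIV. (\<Sum>d\<in>UNIV. ginv g y e d * X d) / 2 * g y e b)"
    unfolding Gam_def X_def by simp
  also have "\<dots> = (\<Sum>e\<in>UNIV. \<Sum>d\<in>UNIV. ginv g y e d * X d * g y e b) / 2"
    by (simp add: sum_divide_distrib sum_distrib_right)
  also have "\<dots> = (\<Sum>d\<in>UNIV. \<Sum>e\<in>UNIV. ginv g y e d * X d * g y e b) / 2"
    by (subst sum.swap) (rule refl)
  also have "\<dots> = (\<Sum>d\<in>UNIV. X d * (\<Sum>e\<in>UNIV. ginv g y d e * g y e b)) / 2"
    by (simp add: sum_distrib_left ginv_sym[OF PR y, of _ d for d] mult_ac)
  also have "\<dots> = X b / 2" by (simp add: ginv_left[OF PR y] if_distrib cong: if_cong)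
  finally show ?thesis by (simp add: X_def)
qed

lemma metric_compat: "y \<in> U \<Longrightarrow> pd c (\<lambda>z. g z a b) y =
    (\<Sum>e\<in>UNIV. Gam g y e c a * g y e b + Gam g y e c b * g y a e)"
proof -
  assume y: "y \<in> U"
  have "(\<Sum>e\<in>UNIV. Gam g y e c b * g y a e) = (\<Sum>e\<in>UNIV. Gam g y e c b * g y e a)"
    using g_sym[OF PR y] by simp
  then have "(\<Sum>e\<in>UNIV. Gam g y e c a * g y e b + Gam g y e c b * g y a e)
     = (pd c (\<lambda>z. g z b a) y + pd a (\<lambda>z. g z b c) y - pd b (\<lambda>z. g z c a) y) / 2
     + (pd c (\<lambda>z. g z a b) y + pd b (\<lambda>z. g z a c) y - pd a (\<lambda>z. g z c b) y) / 2"
    by (simp add: sum.distrib gam_lower[OF y])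
  also have "\<dots> = pd c (\<lambda>z. g z a b) y"
    using dg_sym[OF y, of c b a] dg_sym[OF y, of a b c] dg_sym[OF y, of b c a] by (simp add: field_simps)
  finally show ?thesis by simp
qed

lemma d_ginv: "y \<in> U \<Longrightarrow> pd a (\<lambda>z. ginv g z c f) y =
   - (\<Sum>e\<in>UNIV. \<Sum>d\<in>UNIV. ginv g y c d * pd a (\<lambda>z. g z d e) y * ginv g y e f)"
proof -
  assume y: "y \<in> U"
  have z: "pd a (\<lambda>z. \<Sum>d\<in>UNIV. ginv g z c d * g z d e) y = 0" for e
  proof -
    have "pd a (\<lambda>z. \<Sum>d\<in>UNIV. ginv g z c d * g z d e) y = pd a (\<lambda>z. (if c = e then 1 else 0)) y"
      by (rule pd_cong[OF U_open[OF PR] y]) (simp add: ginv_left[OF PR])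
    then show ?thesis by simp
  qed
  have "pd a (\<lambda>z. \<Sum>d\<in>UNIV. ginv g z c d * g z d e) y
      = (\<Sum>d\<in>UNIV. ginv g y c d * pd a (\<lambda>z. g z d e) y + pd a (\<lambda>z. ginv g z c d) y * g y d e)" for e
    by (simp add: pd_sum pd_mult ginv_diff[OF y] g_diff[OF y] differentiable_mult)
  with z have E: "(\<Sum>d\<in>UNIV. pd a (\<lambda>z. ginv g z c d) y * g y d e)
      = - (\<Sum>d\<in>UNIV. ginv g y c d * pd a (\<lambda>z. g z d e) y)" for e
    by (simp add: sum.distrib eq_neg_iff_add_eq_0 add.commute)
  have "pd a (\<lambda>z. ginv g z c f) y = (\<Sum>d\<in>UNIV. pd a (\<lambda>z. ginv g z c d) y * (\<Sum>e\<in>UNIV. g y d e * ginv g y e f))"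
    by (simp add: ginv_right[OF PR y] if_distrib cong: if_cong)
  also have "\<dots> = (\<Sum>d\<in>UNIV. \<Sum>e\<in>UNIV. pd a (\<lambda>z. ginv g z c d) y * g y d e * ginv g y e f)"
    by (simp add: sum_distrib_left mult.assoc)
  also have "\<dots> = (\<Sum>e\<in>UNIV. \<Sum>d\<in>UNIV. pd a (\<lambda>z. ginv g z c d) y * g y d e * ginv g y e f)"
    by (rule sum.swap)
  also have "\<dots> = (\<Sum>e\<in>UNIV. (\<Sum>d\<in>UNIV. pd a (\<lambda>z. ginv g z c d) y * g y d e) * ginv g y e f)"
    by (simp add: sum_distrib_right)
  also have "\<dots> = (\<Sum>e\<in>UNIV. - (\<Sum>d\<in>UNIV. ginv g y c d * pd a (\<lambda>z. g z d e) y) * ginv g y e f)"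
    by (simp add: E)
  also have "\<dots> = - (\<Sum>e\<in>UNIV. \<Sum>d\<in>UNIV. ginv g y c d * pd a (\<lambda>z. g z d e) y * ginv g y e f)"
    by (simp add: sum_distrib_right sum_negf)
  finally show ?thesis .
qed

end

lemma trace_swap2:
  fixes M A B :: "3 \<Rightarrow> 3 \<Rightarrow> real"
  shows "(\<Sum>c\<in>UNIV. \<Sum>d\<in>UNIV. (\<Sum>e\<in>UNIV. \<Sum>f\<in>UNIV. M c f * A f e * M e d) * B d c)
       = (\<Sum>c\<in>UNIV. \<Sum>d\<in>UNIV. (\<Sum>e\<in>UNIV. \<Sum>f\<in>UNIV. M c f * B f e * M e d) * A d c)"
proof -
  have "(\<Sum>c\<in>UNIV. \<Sum>d\<in>UNIV. (\<Sum>e\<in>UNIV. \<Sum>f\<in>UNIV. M c f * A f e * M e d) * B d c)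
    = (\<Sum>c\<in>UNIV. \<Sum>d\<in>UNIV. \<Sum>e\<in>UNIV. \<Sum>f\<in>UNIV. M c f * A f e * M e d * B d c)"
    by (simp add: sum_distrib_right)
  also have "\<dots> = (\<Sum>(c,d,e,f)\<in>UNIV. M c f * A f e * M e d * B d c)"
    by (simp add: sum.cartesian_product UNIV_Times_UNIV[symmetric] del: UNIV_Times_UNIV)
  also have "\<dots> = (\<Sum>(c,d,e,f)\<in>UNIV. M c f * B f e * M e d * A d c)"
    by (rule sum.reindex_bij_witness[where i="\<lambda>(c,d,e,f). (e,f,c,d)" and j="\<lambda>(c,d,e,f). (e,f,c,d)"]) (auto simp: mult_ac)
  also have "\<dots> = (\<Sum>c\<in>UNIV. \<Sum>d\<in>UNIV. \<Sum>e\<in>UNIV. \<Sum>f\<in>UNIV. M c f * B f e * M e d * A d c)"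
    by (simp add: sum.cartesian_product UNIV_Times_UNIV[symmetric] mult_ac del: UNIV_Times_UNIV)
  also have "\<dots> = (\<Sum>c\<in>UNIV. \<Sum>d\<in>UNIV. (\<Sum>e\<in>UNIV. \<Sum>f\<in>UNIV. M c f * B f e * M e d) * A d c)"
    by (simp add: sum_distrib_right)
  finally show ?thesis .
qed

lemma pd_divc:
  fixes f :: "pt \<Rightarrow> real"
  assumes "f differentiable (at x)"
  shows "pd i (\<lambda>y. f y / c) x = pd i f x / c"
proof -
  have "pd i (\<lambda>y. f y * inverse c) x = f x * pd i (\<lambda>y. inverse c) x + pd i f x * inverse c"
    by (rule pd_mult[OF assms]) simp
  then show ?thesis by (simp add: divide_inverse)
qed

context
  fixes U g assumes PR: "pseudo_riemannian U g"
begin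

lemma W_eq: "z \<in> U \<Longrightarrow> (\<Sum>c\<in>UNIV. Gam g z c c b) =
   (\<Sum>c\<in>UNIV. \<Sum>d\<in>UNIV. ginv g z c d * pd b (\<lambda>w. g w d c) z) / 2"
proof -
  assume z: "z \<in> U"
  have A1: "(\<Sum>c\<in>UNIV. \<Sum>d\<in>UNIV. ginv g z c d * pd d (\<lambda>w. g w c b) z)
      = (\<Sum>c\<in>UNIV. \<Sum>d\<in>UNIV. ginv g z c d * pd c (\<lambda>w. g w d b) z)"
  proof -
    have "(\<Sum>c\<in>UNIV. \<Sum>d\<in>UNIV. ginv g z c d * pd c (\<lambda>w. g w d b) z)
       = (\<Sum>d\<in>UNIV. \<Sum>c\<in>UNIV. ginv g z c d * pd c (\<lambda>w. g w d b) z)" by (rule sum.swap)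
    also have "\<dots> = (\<Sum>d\<in>UNIV. \<Sum>c\<in>UNIV. ginv g z d c * pd c (\<lambda>w. g w d b) z)"
      using ginv_sym[OF PR z] by simp
    finally show ?thesis by simp
  qed
  have "(\<Sum>c\<in>UNIV. Gam g z c c b) = ((\<Sum>c\<in>UNIV. \<Sum>d\<in>UNIV. ginv g z c d * pd c (\<lambda>w. g w d b) z)
     + (\<Sum>c\<in>UNIV. \<Sum>d\<in>UNIV. ginv g z c d * pd b (\<lambda>w. g w d c) z)
     - (\<Sum>c\<in>UNIV. \<Sum>d\<in>UNIV. ginv g z c d * pd d (\<lambda>w. g w c b) z)) / 2"
    unfolding Gam_def by (simp add: sum_divide_distrib[symmetric] sum.distrib sum_subtractf
        algebra_simps)
  then show ?thesis using A1 by simp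
qed

lemma dW: "y \<in> U \<Longrightarrow> pd a (\<lambda>z. \<Sum>c\<in>UNIV. Gam g z c c b) y =
   (- (\<Sum>c\<in>UNIV. \<Sum>d\<in>UNIV. (\<Sum>e\<in>UNIV. \<Sum>f\<in>UNIV. ginv g y c f * pd a (\<lambda>w. g w f e) y * ginv g y e d)
        * pd b (\<lambda>w. g w d c) y)
    + (\<Sum>c\<in>UNIV. \<Sum>d\<in>UNIV. ginv g y c d * pd a (pd b (\<lambda>w. g w d c)) y)) / 2"
proof -
  assume y: "y \<in> U"
  have "pd a (\<lambda>z. \<Sum>c\<in>UNIV. Gam g z c c b) y
     = pd a (\<lambda>z. (\<Sum>c\<in>UNIV. \<Sum>d\<in>UNIV. ginv g z c d * pd b (\<lambda>w. g w d c) z) / 2) y"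
    by (rule pd_cong[OF U_open[OF PR] y]) (rule W_eq)
  also have "\<dots> = (\<Sum>c\<in>UNIV. \<Sum>d\<in>UNIV. pd a (\<lambda>z. ginv g z c d * pd b (\<lambda>w. g w d c) z) y) / 2"
    by (simp add: pd_divc pd_sum ginv_diff[OF PR y] dg_diff[OF PR y] differentiable_mult differentiable_sum)
  also have "\<dots> = (\<Sum>c\<in>UNIV. \<Sum>d\<in>UNIV. ginv g y c d * pd a (pd b (\<lambda>w. g w d c)) y
       + pd a (\<lambda>z. ginv g z c d) y * pd b (\<lambda>w. g w d c) y) / 2"
    by (simp add: pd_mult ginv_diff[OF PR y] dg_diff[OF PR y])
  also have "\<dots> = (\<Sum>c\<in>UNIV. \<Sum>d\<in>UNIV. ginv g y c d * pd a (pd b (\<lambda>w. g w d c)) y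
       + - (\<Sum>e\<in>UNIV. \<Sum>f\<in>UNIV. ginv g y c f * pd a (\<lambda>w. g w f e) y * ginv g y e d) * pd b (\<lambda>w. g w d c) y) / 2"
    by (simp add: d_ginv[OF PR y])
  also have "\<dots> = (- (\<Sum>c\<in>UNIV. \<Sum>d\<in>UNIV. (\<Sum>e\<in>UNIV. \<Sum>f\<in>UNIV. ginv g y c f * pd a (\<lambda>w. g w f e) y * ginv g y e d)
        * pd b (\<lambda>w. g w d c) y)
    + (\<Sum>c\<in>UNIV. \<Sum>d\<in>UNIV. ginv g y c d * pd a (pd b (\<lambda>w. g w d c)) y)) / 2"
    by (simp only: minus_mult_left[symmetric] sum.distrib sum_negf add.commute)
  finally show ?thesis .
qed

lemma dW_sym: "y \<in> U \<Longrightarrow> pd a (\<lambda>z. \<Sum>c\<in>UNIV. Gam g z c c b) y = pd b (\<lambda>z. \<Sum>c\<in>UNIV. Gam g z c c a) y"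
proof -
  assume y: "y \<in> U"
  have s: "pd a (pd b (\<lambda>w. g w d c)) y = pd b (pd a (\<lambda>w. g w d c)) y" for c d
    using schwarz[OF U_open[OF PR] _ y] g_smooth[OF PR] unfolding smooth_on_def by blast
  show ?thesis unfolding dW[OF y, of a b] dW[OF y, of b a] s
    using trace_swap2[of "ginv g y" "\<lambda>f e. pd a (\<lambda>w. g w f e) y" "\<lambda>d c. pd b (\<lambda>w. g w d c) y"]
    by simp
qed

lemma Ric_sym: "y \<in> U \<Longrightarrow> Ric g y a b = Ric g y b a"
proof -
  assume y: "y \<in> U"
  have R: "Ric g y a b = pd a (\<lambda>z. \<Sum>c\<in>UNIV. Gam g z c c b) y - (\<Sum>c\<in>UNIV. pd c (\<lambda>z. Gam g z c a b) y)
     + (\<Sum>c\<in>UNIV. \<Sum>e\<in>UNIV. Gam g y c a e * Gam g y e c b)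
     - (\<Sum>c\<in>UNIV. \<Sum>e\<in>UNIV. Gam g y c c e * Gam g y e a b)" for a b
    unfolding Ric_def Riem_def
    by (simp add: pd_sum Gam_diff[OF PR y] sum.distrib sum_subtractf)
  have 1: "(\<Sum>c\<in>UNIV. pd c (\<lambda>z. Gam g z c a b) y) = (\<Sum>c\<in>UNIV. pd c (\<lambda>z. Gam g z c b a) y)"
    by (intro sum.cong refl pd_cong[OF U_open[OF PR] y]) (rule Gam_sym[OF PR])
  have 2: "(\<Sum>c\<in>UNIV. \<Sum>e\<in>UNIV. Gam g y c c e * Gam g y e a b) = (\<Sum>c\<in>UNIV. \<Sum>e\<in>UNIV. Gam g y c c e * Gam g y e b a)"
    using Gam_sym[OF PR y] by simp
  have 3: "(\<Sum>c\<in>UNIV. \<Sum>e\<in>UNIV. Gam g y c a e * Gam g y e c b) = (\<Sum>c\<in>UNIV. \<Sum>e\<in>UNIV. Gam g y c b e * Gam g y e c a)"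
  proof -
    have "(\<Sum>c\<in>UNIV. \<Sum>e\<in>UNIV. Gam g y c a e * Gam g y e c b) = (\<Sum>e\<in>UNIV. \<Sum>c\<in>UNIV. Gam g y c a e * Gam g y e c b)"
      by (rule sum.swap)
    also have "\<dots> = (\<Sum>e\<in>UNIV. \<Sum>c\<in>UNIV. Gam g y e b c * Gam g y c e a)"
      using Gam_sym[OF PR y] by (simp add: mult.commute)
    finally show ?thesis .
  qed
  show ?thesis unfolding R[of a b] R[of b a] 1 2 3 dW_sym[OF y, of a b] ..
qed

lemma Phi_sym: "y \<in> U \<Longrightarrow> Phi g y a b = Phi g y b a"
  unfolding Phi_def using Ric_sym g_sym[OF PR] by simp

lemma trace_g: "y \<in> U \<Longrightarrow> (\<Sum>a\<in>UNIV. \<Sum>b\<in>UNIV. ginv g y a b * g y a b) = 3"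
proof -
  assume y: "y \<in> U"
  have "(\<Sum>a\<in>UNIV. \<Sum>b\<in>UNIV. ginv g y a b * g y a b) = (\<Sum>a\<in>UNIV. \<Sum>b\<in>UNIV. ginv g y a b * g y b a)"
    using g_sym[OF PR y] by simp
  also have "\<dots> = (\<Sum>a\<in>(UNIV::3 set). 1::real)" by (simp add: ginv_left[OF PR y])
  finally show ?thesis by simp
qed

lemma Phi_trace: "y \<in> U \<Longrightarrow> (\<Sum>a\<in>UNIV. \<Sum>b\<in>UNIV. ginv g y a b * Phi g y a b) = 0"
proof -
  assume y: "y \<in> U"
  have "(\<Sum>a\<in>UNIV. \<Sum>b\<in>UNIV. ginv g y a b * Phi g y a b)
     = (\<Sum>a\<in>UNIV. \<Sum>b\<in>UNIV. ginv g y a b * Ric g y a b - Scal g y / 3 * (ginv g y a b * g y a b))"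
    unfolding Phi_def by (simp add: algebra_simps)
  also have "\<dots> = (\<Sum>a\<in>UNIV. \<Sum>b\<in>UNIV. ginv g y a b * Ric g y a b)
      - Scal g y / 3 * (\<Sum>a\<in>UNIV. \<Sum>b\<in>UNIV. ginv g y a b * g y a b)"
    by (simp add: sum_subtractf sum_distrib_left)
  also have "\<dots> = Scal g y - Scal g y / 3 * (\<Sum>a\<in>UNIV. \<Sum>b\<in>UNIV. ginv g y a b * g y a b)"
    unfolding Scal_def ..
  finally have "(\<Sum>a\<in>UNIV. \<Sum>b\<in>UNIV. ginv g y a b * Phi g y a b)
     = Scal g y - Scal g y / 3 * (\<Sum>a\<in>UNIV. \<Sum>b\<in>UNIV. ginv g y a b * g y a b)" .
  then show ?thesis using trace_g[OF y] by simp
qed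

end

definition bil :: "(3 \<Rightarrow> 3 \<Rightarrow> complex) \<Rightarrow> (3 \<Rightarrow> complex) \<Rightarrow> (3 \<Rightarrow> complex) \<Rightarrow> complex" where
  "bil M u v = (\<Sum>a\<in>UNIV. \<Sum>b\<in>UNIV. M a b * u a * v b)"

lemma gC_bil: "gC g x u v = bil (\<lambda>a b. of_real (g x a b)) u v"
  by (simp add: gC_def bil_def)
lemma PhiC_bil: "PhiC g x u v = bil (\<lambda>a b. of_real (Phi g x a b)) u v"
  by (simp add: PhiC_def bil_def)

lemma bil_lin_left: "bil M (\<lambda>i. a * u i + b * w i) v = a * bil M u v + b * bil M w v"
  by (simp add: bil_def algebra_simps sum.distrib sum_distrib_left)
lemma bil_lin3_left: "bil M (\<lambda>i. a * u i + b * w i + c * z i) v = a * bil M u v + b * bil M w v + c * bil M z v"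
  by (simp add: bil_def algebra_simps sum.distrib sum_distrib_left)
lemma bil_lin_right: "bil M v (\<lambda>i. a * u i + b * w i) = a * bil M v u + b * bil M v w"
  by (simp add: bil_def algebra_simps sum.distrib sum_distrib_left)
lemma bil_lin3_right: "bil M v (\<lambda>i. a * u i + b * w i + c * z i) = a * bil M v u + b * bil M v w + c * bil M v z"
  by (simp add: bil_def algebra_simps sum.distrib sum_distrib_left)
lemma bil_scale_right: "bil M u (\<lambda>i. c * v i) = c * bil M u v"
  by (simp add: bil_def algebra_simps sum_distrib_left)
lemma bil_sym: "(\<And>a b. M a b = M b a) \<Longrightarrow> bil M u v = bil M v u"
proof -
  assume s: "\<And>a b. M a b = M b a"
  have "bil M u v = (\<Sum>b\<in>UNIV. \<Sum>a\<in>UNIV. M a b * u a * v b)" unfolding bil_def by (rule sum.swap)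
  also have "\<dots> = bil M v u" unfolding bil_def using s by (simp add: mult_ac)
  finally show ?thesis .
qed

lemma frame_inv:
  fixes G :: "3 \<Rightarrow> 3 \<Rightarrow> real" and k l n :: "3 \<Rightarrow> complex"
  assumes sym: "\<And>a b. G a b = G b a"
    and f1: "bil (\<lambda>a b. of_real (G a b)) k l = 1" and f2: "bil (\<lambda>a b. of_real (G a b)) n n = -1/2"
    and f3: "bil (\<lambda>a b. of_real (G a b)) k k = 0" and f4: "bil (\<lambda>a b. of_real (G a b)) l l = 0"
    and f5: "bil (\<lambda>a b. of_real (G a b)) k n = 0" and f6: "bil (\<lambda>a b. of_real (G a b)) l n = 0"
  shows "(\<chi> a b. k a * l b + l a * k b - 2 * n a * n b) ** (\<chi> a b. complex_of_real (G a b)) = mat 1"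
proof -
  let ?GC = "\<lambda>a b. complex_of_real (G a b)"
  define col where "col j = (if j = (1::3) then k else if j = 2 then l else n)" for j
  define F :: "complex^3^3" where "F = (\<chi> i j. col j i)"
  define GM :: "complex^3^3" where "GM = (\<chi> a b. ?GC a b)"
  define Ni :: "complex^3^3" where
    "Ni = (\<chi> i j. if (i = 1 \<and> j = 2) \<or> (i = 2 \<and> j = 1) then 1 else if i = 3 \<and> j = 3 then -2 else 0)"
  have symb: "bil ?GC u v = bil ?GC v u" for u v by (rule bil_sym) (simp add: sym)
  have B: "(transpose F ** GM ** F) $ i $ j = bil ?GC (col i) (col j)" for i j
  proof -
    have "(transpose F ** GM ** F) $ i $ j = (\<Sum>m\<in>UNIV. (\<Sum>a\<in>UNIV. col i a * ?GC a m) * col j m)"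
      by (simp add: matrix_matrix_mult_def transpose_def F_def GM_def)
    also have "\<dots> = (\<Sum>m\<in>UNIV. \<Sum>a\<in>UNIV. ?GC a m * col i a * col j m)"
      by (simp add: sum_distrib_right sum_distrib_left mult_ac)
    also have "\<dots> = bil ?GC (col i) (col j)" unfolding bil_def by (rule sum.swap)
    finally show ?thesis .
  qed
  have C: "(transpose F ** GM ** F ** Ni) $ i $ j = mat 1 $ i $ j" for i j
  proof -
    have "(transpose F ** GM ** F ** Ni) $ i $ j = (\<Sum>m\<in>UNIV. bil ?GC (col i) (col m) * Ni $ m $ j)"
      by (simp add: matrix_matrix_mult_def[of "transpose F ** GM ** F"] B)
    also have "\<dots> = mat 1 $ i $ j"
      using exhaust_3[of i] exhaust_3[of j] f1 f2 f3 f4 f5 f6 symb[of l k] symb[of n k] symb[of n l]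
      by (auto simp: sum_3 Ni_def col_def mat_def)
    finally show ?thesis .
  qed
  have "transpose F ** (GM ** F ** Ni) = mat 1" using C by (simp add: vec_eq_iff matrix_mul_assoc)
  then have "(GM ** F ** Ni) ** transpose F = mat 1" using matrix_left_right_inverse by blast
  then have "GM ** (F ** Ni ** transpose F) = mat 1" by (simp add: matrix_mul_assoc)
  then have "(F ** Ni ** transpose F) ** GM = mat 1" using matrix_left_right_inverse by blast
  moreover have "F ** Ni ** transpose F = (\<chi> a b. k a * l b + l a * k b - 2 * n a * n b)"
    by (simp add: vec_eq_iff matrix_matrix_mult_def transpose_def F_def Ni_def col_def sum_3 algebra_simps)
  ultimately show ?thesis by (simp add: GM_def)
qed

lemma frame_complete:
  fixes G :: "3 \<Rightarrow> 3 \<Rightarrow> real" and k l n :: "3 \<Rightarrow> complex"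
  assumes H: "(\<chi> a b. k a * l b + l a * k b - 2 * n a * n b) ** (\<chi> a b. complex_of_real (G a b)) = mat 1"
    and sym: "\<And>a b. G a b = G b a"
  shows "v = (\<lambda>i. bil (\<lambda>a b. of_real (G a b)) v l * k i + bil (\<lambda>a b. of_real (G a b)) v k * l i
      + (-2 * bil (\<lambda>a b. of_real (G a b)) v n) * n i)"
proof
  fix i
  let ?GC = "\<lambda>a b. complex_of_real (G a b)"
  let ?S = "\<lambda>b. \<Sum>c\<in>UNIV. ?GC b c * v c"
  have symb: "bil ?GC u w = bil ?GC w u" for u w by (rule bil_sym) (simp add: sym)
  have e: "(\<Sum>b\<in>UNIV. u b * ?S b) = bil ?GC u v" for u
    by (simp add: bil_def sum_distrib_left mult_ac)
  have "v i = (((\<chi> a b. k a * l b + l a * k b - 2 * n a * n b) ** (\<chi> a b. complex_of_real (G a b))) *v (\<chi> c. v c)) $ i"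
    using H by simp
  also have "\<dots> = ((\<chi> a b. k a * l b + l a * k b - 2 * n a * n b) *v ((\<chi> a b. complex_of_real (G a b)) *v (\<chi> c. v c))) $ i"
    by (simp add: matrix_vector_mul_assoc)
  also have "\<dots> = (\<Sum>b\<in>UNIV. (k i * l b + l i * k b - 2 * n i * n b) * ?S b)"
    by (simp add: matrix_vector_mult_def)
  also have "\<dots> = k i * (\<Sum>b\<in>UNIV. l b * ?S b) + l i * (\<Sum>b\<in>UNIV. k b * ?S b) - 2 * n i * (\<Sum>b\<in>UNIV. n b * ?S b)"
    by (simp add: algebra_simps sum.distrib sum_subtractf sum_distrib_left)
  also have "\<dots> = bil ?GC v l * k i + bil ?GC v k * l i + (-2 * bil ?GC v n) * n i"
    unfolding e using symb by (simp add: algebra_simps)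
  finally show "v i = bil ?GC v l * k i + bil ?GC v k * l i + (-2 * bil ?GC v n) * n i" .
qed

lemma frame_ginv:
  fixes G Gi :: "3 \<Rightarrow> 3 \<Rightarrow> real" and k l n :: "3 \<Rightarrow> complex"
  assumes H: "(\<chi> a b. k a * l b + l a * k b - 2 * n a * n b) ** (\<chi> a b. complex_of_real (G a b)) = mat 1"
    and inv: "\<And>a c. (\<Sum>b\<in>UNIV. G a b * Gi b c) = (if a = c then 1 else 0)"
  shows "complex_of_real (Gi a b) = k a * l b + l a * k b - 2 * n a * n b"
proof -
  let ?H = "(\<chi> a b. k a * l b + l a * k b - 2 * n a * n b) :: complex^3^3"
  let ?GM = "(\<chi> a b. complex_of_real (G a b)) :: complex^3^3"
  let ?GiM = "(\<chi> a b. complex_of_real (Gi a b)) :: complex^3^3"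
  have "?GM ** ?GiM = mat 1"
  proof -
    have "(?GM ** ?GiM) $ a $ c = mat 1 $ a $ c" for a c
    proof -
      have "(?GM ** ?GiM) $ a $ c = of_real (\<Sum>b\<in>UNIV. G a b * Gi b c)"
        by (simp add: matrix_matrix_mult_def)
      then show ?thesis using inv[of a c] by (simp add: mat_def)
    qed
    then show ?thesis by (simp add: vec_eq_iff)
  qed
  then have "?H = (?H ** ?GM) ** ?GiM" by (simp add: matrix_mul_assoc[symmetric])
  then have "?H = ?GiM" using H by simp
  then have "?H $ a $ b = ?GiM $ a $ b" by simp
  then show ?thesis by simp
qed

lemma sum_rot4:
  "(\<Sum>a\<in>A. \<Sum>b\<in>B. \<Sum>c\<in>C. \<Sum>d\<in>D. F a b c d) = (\<Sum>b\<in>B. \<Sum>c\<in>C. \<Sum>d\<in>D. \<Sum>a\<in>A. F a b c d)"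
proof -
  have "(\<Sum>a\<in>A. \<Sum>b\<in>B. \<Sum>c\<in>C. \<Sum>d\<in>D. F a b c d) = (\<Sum>b\<in>B. \<Sum>a\<in>A. \<Sum>c\<in>C. \<Sum>d\<in>D. F a b c d)"
    by (rule sum.swap)
  also have "\<dots> = (\<Sum>b\<in>B. \<Sum>c\<in>C. \<Sum>a\<in>A. \<Sum>d\<in>D. F a b c d)"
    by (rule sum.cong[OF refl], rule sum.swap)
  also have "\<dots> = (\<Sum>b\<in>B. \<Sum>c\<in>C. \<Sum>d\<in>D. \<Sum>a\<in>A. F a b c d)"
    by (rule sum.cong[OF refl], rule sum.cong[OF refl], rule sum.swap)
  finally show ?thesis .
qed

lemma sum_rot3:
  "(\<Sum>b\<in>B. \<Sum>c\<in>C. \<Sum>d\<in>D. F b c d) = (\<Sum>c\<in>C. \<Sum>d\<in>D. \<Sum>b\<in>B. F b c d)"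
proof -
  have "(\<Sum>b\<in>B. \<Sum>c\<in>C. \<Sum>d\<in>D. F b c d) = (\<Sum>c\<in>C. \<Sum>b\<in>B. \<Sum>d\<in>D. F b c d)"
    by (rule sum.swap)
  also have "\<dots> = (\<Sum>c\<in>C. \<Sum>d\<in>D. \<Sum>b\<in>B. F b c d)"
    by (rule sum.cong[OF refl], rule sum.swap)
  finally show ?thesis .
qed

lemma bil_add_left: "bil M (\<lambda>i. u i + w i) v = bil M u v + bil M w v"
  by (simp add: bil_def algebra_simps sum.distrib)
lemma bil_add_right: "bil M v (\<lambda>i. u i + w i) = bil M v u + bil M v w"
  by (simp add: bil_def algebra_simps sum.distrib)

lemma t3:
  fixes L :: "3 \<Rightarrow> 3 \<Rightarrow> 3 \<Rightarrow> complex" and X Y K :: "3 \<Rightarrow> complex"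
  shows "(\<Sum>c\<in>UNIV. X c * (\<Sum>a\<in>UNIV. \<Sum>b\<in>UNIV. (L b c a + L a c b) * Y a * K b))
    = (\<Sum>b\<in>UNIV. \<Sum>c\<in>UNIV. \<Sum>d\<in>UNIV. X c * Y d * K b * L b c d) + (\<Sum>a\<in>UNIV. \<Sum>c\<in>UNIV. \<Sum>d\<in>UNIV. Y a * X c * K d * L a c d)"
  by (simp add: sum_3 algebra_simps)

lemma compat_alg:
  fixes G :: "3 \<Rightarrow> 3 \<Rightarrow> complex" and \<Gamma> dG :: "3 \<Rightarrow> 3 \<Rightarrow> 3 \<Rightarrow> complex"
    and dY dK :: "3 \<Rightarrow> 3 \<Rightarrow> complex" and X Y K :: "3 \<Rightarrow> complex"
  assumes sym: "\<And>a b. G a b = G b a"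
    and dG: "\<And>c a b. dG c a b = (\<Sum>e\<in>UNIV. \<Gamma> e c a * G e b) + (\<Sum>e\<in>UNIV. \<Gamma> e c b * G e a)"
  shows "bil G (\<lambda>c'. (\<Sum>a\<in>UNIV. X a * dY a c') + (\<Sum>a\<in>UNIV. \<Sum>b\<in>UNIV. \<Gamma> c' a b * X a * Y b)) K
       + bil G Y (\<lambda>c'. (\<Sum>a\<in>UNIV. X a * dK a c') + (\<Sum>a\<in>UNIV. \<Sum>b\<in>UNIV. \<Gamma> c' a b * X a * K b))
   = (\<Sum>c\<in>UNIV. X c * (\<Sum>a\<in>UNIV. \<Sum>b\<in>UNIV. dG c a b * Y a * K b + G a b * (dY c a * K b + Y a * dK c b)))"
proof -
  define L where "L b c d = (\<Sum>e\<in>UNIV. \<Gamma> e c d * G e b)" for b c d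
  have P1: "bil G (\<lambda>c'. \<Sum>a\<in>UNIV. \<Sum>b\<in>UNIV. \<Gamma> c' a b * X a * Y b) K
      = (\<Sum>b\<in>UNIV. \<Sum>c\<in>UNIV. \<Sum>d\<in>UNIV. X c * Y d * K b * L b c d)"
  proof -
    have "bil G (\<lambda>c'. \<Sum>a\<in>UNIV. \<Sum>b\<in>UNIV. \<Gamma> c' a b * X a * Y b) K
       = (\<Sum>a\<in>UNIV. \<Sum>b\<in>UNIV. \<Sum>c\<in>UNIV. \<Sum>d\<in>UNIV. G a b * \<Gamma> a c d * X c * Y d * K b)"
      by (simp add: bil_def sum_distrib_left sum_distrib_right mult_ac)
    also have "\<dots> = (\<Sum>b\<in>UNIV. \<Sum>c\<in>UNIV. \<Sum>d\<in>UNIV. \<Sum>a\<in>UNIV. G a b * \<Gamma> a c d * X c * Y d * K b)"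
      by (rule sum_rot4)
    also have "\<dots> = (\<Sum>b\<in>UNIV. \<Sum>c\<in>UNIV. \<Sum>d\<in>UNIV. X c * Y d * K b * L b c d)"
      by (simp add: L_def sum_distrib_left mult_ac)
    finally show ?thesis .
  qed
  have P2: "bil G Y (\<lambda>c'. \<Sum>a\<in>UNIV. \<Sum>b\<in>UNIV. \<Gamma> c' a b * X a * K b)
      = (\<Sum>a\<in>UNIV. \<Sum>c\<in>UNIV. \<Sum>d\<in>UNIV. Y a * X c * K d * L a c d)"
  proof -
    have "bil G Y (\<lambda>c'. \<Sum>a\<in>UNIV. \<Sum>b\<in>UNIV. \<Gamma> c' a b * X a * K b)
       = (\<Sum>a\<in>UNIV. \<Sum>b\<in>UNIV. \<Sum>c\<in>UNIV. \<Sum>d\<in>UNIV. G b a * \<Gamma> b c d * X c * K d * Y a)"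
      by (simp add: bil_def sum_distrib_left sum_distrib_right mult_ac sym[of _ a for a])
    also have "\<dots> = (\<Sum>a\<in>UNIV. \<Sum>c\<in>UNIV. \<Sum>d\<in>UNIV. \<Sum>b\<in>UNIV. G b a * \<Gamma> b c d * X c * K d * Y a)"
      by (rule sum.cong[OF refl], rule sum_rot3)
    also have "\<dots> = (\<Sum>a\<in>UNIV. \<Sum>c\<in>UNIV. \<Sum>d\<in>UNIV. Y a * X c * K d * L a c d)"
      by (simp add: L_def sum_distrib_left mult_ac)
    finally show ?thesis .
  qed
  have P3: "(\<Sum>c\<in>UNIV. X c * (\<Sum>a\<in>UNIV. \<Sum>b\<in>UNIV. dG c a b * Y a * K b + G a b * (dY c a * K b + Y a * dK c b)))
     = (\<Sum>c\<in>UNIV. X c * (\<Sum>a\<in>UNIV. \<Sum>b\<in>UNIV. (L b c a + L a c b) * Y a * K b))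
     + (\<Sum>c\<in>UNIV. X c * (\<Sum>a\<in>UNIV. \<Sum>b\<in>UNIV. G a b * dY c a * K b))
     + (\<Sum>c\<in>UNIV. X c * (\<Sum>a\<in>UNIV. \<Sum>b\<in>UNIV. G a b * Y a * dK c b))"
    by (simp add: dG L_def algebra_simps sum.distrib)
  have P4: "bil G (\<lambda>c'. \<Sum>a\<in>UNIV. X a * dY a c') K = (\<Sum>c\<in>UNIV. X c * (\<Sum>a\<in>UNIV. \<Sum>b\<in>UNIV. G a b * dY c a * K b))"
    by (simp add: bil_def sum_3 algebra_simps)
  have P5: "bil G Y (\<lambda>c'. \<Sum>a\<in>UNIV. X a * dK a c') = (\<Sum>c\<in>UNIV. X c * (\<Sum>a\<in>UNIV. \<Sum>b\<in>UNIV. G a b * Y a * dK c b))"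
    by (simp add: bil_def sum_3 algebra_simps)
  show ?thesis
    unfolding bil_add_left bil_add_right P1 P2 P3 P4 P5 t3 by (simp add: algebra_simps)
qed

lemma nabla_alg:
  fixes \<Phi> dk :: "3 \<Rightarrow> 3 \<Rightarrow> complex" and dP \<Gamma> :: "3 \<Rightarrow> 3 \<Rightarrow> 3 \<Rightarrow> complex" and k :: "3 \<Rightarrow> complex"
  shows "(\<Sum>a\<in>UNIV. k a * (dP b c a - (\<Sum>e\<in>UNIV. \<Gamma> e b c * \<Phi> e a) - (\<Sum>e\<in>UNIV. \<Gamma> e b a * \<Phi> c e)))
    = (\<Sum>a\<in>UNIV. \<Phi> c a * dk b a + dP b c a * k a) - (\<Sum>e\<in>UNIV. \<Gamma> e b c * (\<Sum>a\<in>UNIV. \<Phi> e a * k a))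
      - (\<Sum>e\<in>UNIV. \<Phi> c e * (dk b e + (\<Sum>a\<in>UNIV. \<Gamma> e b a * k a)))"
  by (simp add: sum_3 algebra_simps)

lemma T_alg:
  fixes \<Phi> D :: "3 \<Rightarrow> 3 \<Rightarrow> complex" and u v :: "3 \<Rightarrow> complex"
  shows "bil \<Phi> u (\<lambda>e. \<Sum>b\<in>UNIV. v b * D b e) = (\<Sum>c\<in>UNIV. \<Sum>b\<in>UNIV. u c * v b * (\<Sum>e\<in>UNIV. \<Phi> c e * D b e))"
  by (simp add: bil_def sum_3 algebra_simps)

lemma trace_alg:
  fixes \<Phi> :: "3 \<Rightarrow> 3 \<Rightarrow> complex" and k l n :: "3 \<Rightarrow> complex"
  shows "(\<Sum>a\<in>UNIV. \<Sum>b\<in>UNIV. (k a * l b + l a * k b - 2 * n a * n b) * \<Phi> a b)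
     = bil \<Phi> k l + bil \<Phi> l k - 2 * bil \<Phi> n n"
  by (simp add: bil_def sum_3 algebra_simps)

lemma diff_of_real: "f differentiable (at x) \<Longrightarrow> (\<lambda>z. complex_of_real (f z)) differentiable (at x)"
  unfolding differentiable_def by (blast intro: has_derivative_of_real)

definition Dk :: "metric \<Rightarrow> (pt \<Rightarrow> 3 \<Rightarrow> complex) \<Rightarrow> pt \<Rightarrow> 3 \<Rightarrow> 3 \<Rightarrow> complex" where
  "Dk g K x b c = pd b (\<lambda>z. K z c) x + (\<Sum>a\<in>UNIV. of_real (Gam g x c b a) * K x a)"

definition Nk :: "metric \<Rightarrow> (pt \<Rightarrow> 3 \<Rightarrow> complex) \<Rightarrow> pt \<Rightarrow> (3 \<Rightarrow> complex) \<Rightarrow> 3 \<Rightarrow> complex" where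
  "Nk g K x v = (\<lambda>c. \<Sum>b\<in>UNIV. v b * Dk g K x b c)"

lemma nabla_Nk: "nablaC g V K x = Nk g K x (V x)"
  by (rule ext) (simp add: nablaC_def Nk_def Dk_def sum.distrib sum_distrib_left algebra_simps)

lemma Nk_lin3: "Nk g K x (\<lambda>i. a * u i + b * w i + c * z i) = (\<lambda>j. a * Nk g K x u j + b * Nk g K x w j + c * Nk g K x z j)"
  by (rule ext) (simp add: Nk_def algebra_simps sum.distrib sum_distrib_left)

context
  fixes U g assumes PR: "pseudo_riemannian U g"
begin

lemma gC_sym: "y \<in> U \<Longrightarrow> gC g y u v = gC g y v u"
  unfolding gC_bil by (rule bil_sym) (simp add: g_sym[OF PR])

lemma PhiC_sym: "y \<in> U \<Longrightarrow> PhiC g y u v = PhiC g y v u"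
  unfolding PhiC_bil by (rule bil_sym) (simp add: Phi_sym[OF PR])

lemma compat_field:
  assumes x: "x \<in> U" and Yd: "\<And>a. (\<lambda>z. Y z a) differentiable (at x)"
    and Kd: "\<And>a. (\<lambda>z. K z a) differentiable (at x)"
    and van: "\<And>z. z \<in> U \<Longrightarrow> gC g z (Y z) (K z) = 0"
  shows "gC g x (nablaC g X Y x) (K x) + gC g x (Y x) (nablaC g X K x) = 0"
proof -
  let ?G = "\<lambda>a b. complex_of_real (g x a b)"
  let ?\<Gamma> = "\<lambda>e c a. complex_of_real (Gam g x e c a)"
  let ?dG = "\<lambda>c a b. complex_of_real (pd c (\<lambda>z. g z a b) x)"
  have dG: "?dG c a b = (\<Sum>e\<in>UNIV. ?\<Gamma> e c a * ?G e b) + (\<Sum>e\<in>UNIV. ?\<Gamma> e c b * ?G e a)" for c a b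
  proof -
    have "pd c (\<lambda>z. g z a b) x = (\<Sum>e\<in>UNIV. Gam g x e c a * g x e b) + (\<Sum>e\<in>UNIV. Gam g x e c b * g x e a)"
      using metric_compat[OF PR x, of c a b] g_sym[OF PR x] by (simp add: sum.distrib)
    then show ?thesis by simp
  qed
  have pdh: "pd c (\<lambda>z. gC g z (Y z) (K z)) x = 0" for c
    by (rule pd_zero[OF U_open[OF PR] x]) (rule van)
  have gd: "(\<lambda>z. complex_of_real (g z a b)) differentiable (at x)" for a b
    by (rule diff_of_real) (rule g_diff[OF PR x])
  have pdh2: "pd c (\<lambda>z. gC g z (Y z) (K z)) x = (\<Sum>a\<in>UNIV. \<Sum>b\<in>UNIV. ?dG c a b * Y x a * K x b
      + ?G a b * (pd c (\<lambda>z. Y z a) x * K x b + Y x a * pd c (\<lambda>z. K z b) x))" for c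
    unfolding gC_def using gd Yd Kd g_diff[OF PR x]
    by (simp add: pd_sum pd_mult pd_of_real differentiable_sum differentiable_mult algebra_simps)
  have NY: "nablaC g X Y x = (\<lambda>c'. (\<Sum>a\<in>UNIV. X x a * pd a (\<lambda>y. Y y c') x) + (\<Sum>a\<in>UNIV. \<Sum>b\<in>UNIV. ?\<Gamma> c' a b * X x a * Y x b))"
    by (rule ext) (simp add: nablaC_def)
  have NK: "nablaC g X K x = (\<lambda>c'. (\<Sum>a\<in>UNIV. X x a * pd a (\<lambda>y. K y c') x) + (\<Sum>a\<in>UNIV. \<Sum>b\<in>UNIV. ?\<Gamma> c' a b * X x a * K x b))"
    by (rule ext) (simp add: nablaC_def)
  have "gC g x (nablaC g X Y x) (K x) + gC g x (Y x) (nablaC g X K x)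
     = (\<Sum>c\<in>UNIV. X x c * pd c (\<lambda>z. gC g z (Y z) (K z)) x)"
    unfolding pdh2 NY NK unfolding gC_bil
    by (rule compat_alg[of ?G ?dG ?\<Gamma>]) (simp_all add: g_sym[OF PR x] dG)
  then show ?thesis by (simp add: pdh)
qed

lemma frame_H:
  assumes y: "y \<in> U" and fr: "null_frame g y k l n"
  shows "(\<chi> a b. k a * l b + l a * k b - 2 * n a * n b) ** (\<chi> a b. complex_of_real (g y a b)) = mat 1"
  using fr unfolding null_frame_def gC_bil
  by (intro frame_inv) (simp_all add: g_sym[OF PR y])

lemma frame_expand:
  assumes y: "y \<in> U" and fr: "null_frame g y k l n"
  shows "v = (\<lambda>i. gC g y v l * k i + gC g y v k * l i + (-2 * gC g y v n) * n i)"
  unfolding gC_bil by (rule frame_complete[OF frame_H[OF y fr]]) (simp add: g_sym[OF PR y])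

lemma phik_zero:
  assumes y: "y \<in> U" and m: "mult3 g y K"
  shows "PhiC g y K v = 0"
proof -
  obtain l n where fr: "null_frame g y K l n" and p: "PhiC g y K K = 0" "PhiC g y K n = 0" "PhiC g y K l = 0"
    using m unfolding mult3_def by auto
  have "PhiC g y K v = PhiC g y K (\<lambda>i. gC g y v l * K i + gC g y v K * l i + (-2 * gC g y v n) * n i)"
    using arg_cong[OF frame_expand[OF y fr, of v], of "PhiC g y K"] .
  also have "\<dots> = 0" unfolding PhiC_bil bil_lin3_right using p unfolding PhiC_bil by simp
  finally show ?thesis .
qed

lemma P_zero:
  assumes y: "y \<in> U" and m: "mult3 g y K"
  shows "(\<Sum>a\<in>UNIV. of_real (Phi g y c a) * K a) = 0"
proof -
  have "PhiC g y K (\<lambda>i. if i = c then 1 else 0) = 0" by (rule phik_zero[OF y m])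
  then have "(\<Sum>a\<in>UNIV. of_real (Phi g y a c) * K a) = 0"
    by (simp add: PhiC_def if_distrib cong: if_cong)
  then show ?thesis using Phi_sym[OF PR y] by simp
qed

end

context
  fixes U g assumes PR: "pseudo_riemannian U g"
begin

lemma T_sym:
  assumes x: "x \<in> U" and kd: "\<And>z a. z \<in> U \<Longrightarrow> (\<lambda>y. k y a) differentiable (at z)"
    and m: "\<And>z. z \<in> U \<Longrightarrow> mult3 g z (k z)"
    and h4: "\<forall>b c. (\<Sum>a\<in>UNIV. k x a * of_real (Cotton g x a b c
            - (g x a b * pd c (Sc g) x - g x a c * pd b (Sc g) x))) = 0"
  shows "(\<Sum>e\<in>UNIV. of_real (Phi g x c e) * Dk g k x b e) = (\<Sum>e\<in>UNIV. of_real (Phi g x b e) * Dk g k x c e)"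
proof -
  have Pz: "(\<Sum>a\<in>UNIV. of_real (Phi g z c a) * k z a) = 0" if "z \<in> U" for z c
    using P_zero[OF PR that m[OF that]] .
  have pd0: "pd b (\<lambda>z. \<Sum>a\<in>UNIV. of_real (Phi g z c a) * k z a) x = 0" for b c
    by (rule pd_zero[OF U_open[OF PR] x]) (rule Pz)
  have dP: "(\<Sum>a\<in>UNIV. of_real (Phi g x c a) * pd b (\<lambda>z. k z a) x + of_real (pd b (\<lambda>y. Phi g y c a) x) * k x a) = 0" for b c
  proof -
    have pdd: "(\<lambda>z. complex_of_real (Phi g z c a)) differentiable (at x)" for c a
      by (rule diff_of_real) (rule Phi_diff[OF PR x])
    have "pd b (\<lambda>z. \<Sum>a\<in>UNIV. of_real (Phi g z c a) * k z a) x
      = (\<Sum>a\<in>UNIV. of_real (Phi g x c a) * pd b (\<lambda>z. k z a) x + of_real (pd b (\<lambda>y. Phi g y c a) x) * k x a)"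
      using pdd kd[OF x] Phi_diff[OF PR x] by (simp add: pd_sum pd_mult pd_of_real differentiable_mult)
    then show ?thesis using pd0 by simp
  qed
  have N: "(\<Sum>a\<in>UNIV. k x a * of_real (nabla2 g (Phi g) x b c a)) = - (\<Sum>e\<in>UNIV. of_real (Phi g x c e) * Dk g k x b e)" for b c
  proof -
    have "(\<Sum>a\<in>UNIV. k x a * of_real (nabla2 g (Phi g) x b c a))
      = (\<Sum>a\<in>UNIV. k x a * (of_real (pd b (\<lambda>y. Phi g y c a) x)
           - (\<Sum>e\<in>UNIV. of_real (Gam g x e b c) * of_real (Phi g x e a))
           - (\<Sum>e\<in>UNIV. of_real (Gam g x e b a) * of_real (Phi g x c e))))"
      by (simp add: nabla2_def)
    also have "\<dots> = (\<Sum>a\<in>UNIV. of_real (Phi g x c a) * pd b (\<lambda>z. k z a) x + of_real (pd b (\<lambda>y. Phi g y c a) x) * k x a)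
       - (\<Sum>e\<in>UNIV. of_real (Gam g x e b c) * (\<Sum>a\<in>UNIV. of_real (Phi g x e a) * k x a))
       - (\<Sum>e\<in>UNIV. of_real (Phi g x c e) * (pd b (\<lambda>z. k z e) x + (\<Sum>a\<in>UNIV. of_real (Gam g x e b a) * k x a)))"
      by (rule nabla_alg[where dP="\<lambda>b c a. complex_of_real (pd b (\<lambda>y. Phi g y c a) x)"
            and \<Phi>="\<lambda>c a. complex_of_real (Phi g x c a)" and \<Gamma>="\<lambda>e b a. complex_of_real (Gam g x e b a)"
            and dk="\<lambda>b a. pd b (\<lambda>z. k z a) x"])
    also have "\<dots> = - (\<Sum>e\<in>UNIV. of_real (Phi g x c e) * Dk g k x b e)"
      using dP Pz[OF x] by (simp add: Dk_def)
    finally show ?thesis .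
  qed
  have "(\<Sum>a\<in>UNIV. k x a * of_real (Cotton g x a b c - (g x a b * pd c (Sc g) x - g x a c * pd b (Sc g) x)))
     = - (\<Sum>a\<in>UNIV. k x a * of_real (nabla2 g (Phi g) x b c a)) + (\<Sum>a\<in>UNIV. k x a * of_real (nabla2 g (Phi g) x c b a))"
    by (simp add: Cotton_def algebra_simps sum.distrib sum_subtractf)
  then have "0 = (\<Sum>e\<in>UNIV. of_real (Phi g x c e) * Dk g k x b e) - (\<Sum>e\<in>UNIV. of_real (Phi g x b e) * Dk g k x c e)"
    using h4 N by simp
  then show ?thesis by simp
qed

end

theorem mainTheorem5:
  fixes U :: "pt set" and g :: metric and N :: "pt \<Rightarrow> (3 \<Rightarrow> complex) set"
    and k :: "pt \<Rightarrow> 3 \<Rightarrow> complex"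
  assumes "pseudo_riemannian U g"
    and "generator U g N k"
    and "\<forall>x\<in>U. mult3 g x (k x)"
    and "\<forall>x\<in>U. \<forall>b c. (\<Sum>a\<in>UNIV. k x a * of_real (Cotton g x a b c
            - (g x a b * pd c (Sc g) x - g x a c * pd b (Sc g) x))) = 0"
    and "\<forall>x\<in>U. \<forall>c. (\<Sum>a\<in>UNIV. \<Sum>b\<in>UNIV. k x a * k x b * of_real (Cotton g x a b c)) = 0"
    and "\<forall>x\<in>U. (\<Sum>a\<in>UNIV. k x a * of_real (pd a (Sc g) x)) = 0"
  shows "co_geodetic U g N"
proof -
  note PR = assms(1)
  have U: "open U" using U_open[OF PR] .
  have ksm: "smooth_field U k" and kgen: "\<And>x. x \<in> U \<Longrightarrow> gC g x (k x) (k x) = 0 \<and> N x = {(\<lambda>i. c * k x i) | c. True}"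
    using assms(2) unfolding generator_def by auto
  have kd: "\<And>z a. z \<in> U \<Longrightarrow> (\<lambda>y. k y a) differentiable (at z)"
    using ksm smooth_diff_at[OF U] unfolding smooth_field_def by blast
  have kN: "k x \<in> N x" if "x \<in> U" for x
  proof -
    have "k x = (\<lambda>i. 1 * k x i)" by simp
    then show ?thesis using kgen[OF that] by blast
  qed
  show ?thesis unfolding co_geodetic_def
  proof (intro allI impI ballI)
    fix X Y Z x
    assume H: "smooth_field U X \<and> smooth_field U Y \<and> smooth_field U Z \<and>
        (\<forall>x\<in>U. X x \<in> perp g N x \<and> Y x \<in> perp g N x \<and> Z x \<in> N x)"
    assume x: "x \<in> U"
    have Yd: "\<And>a. (\<lambda>y. Y y a) differentiable (at x)"
      using H smooth_diff_at[OF U _ x] unfolding smooth_field_def by blast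
    have Yperp: "gC g z (Y z) (k z) = 0" if "z \<in> U" for z
      using H kN[OF that] that unfolding perp_def by blast
    have Xperp: "gC g x (X x) (k x) = 0"
      using H kN[OF x] x unfolding perp_def by blast
    obtain cz where Zx: "Z x = (\<lambda>i. cz * k x i)" using H kgen[OF x] x by blast
    have m: "mult3 g x (k x)" using assms(3) x by blast
    obtain l n where fr: "null_frame g x (k x) l n" and p0: "PhiC g x (k x) (k x) = 0"
      and pn: "PhiC g x (k x) n = 0" and pl: "PhiC g x (k x) l = 0" and p3: "PhiC g x l n \<noteq> 0"
      using m unfolding mult3_def by auto
    let ?N = "Nk g k x"
    have kNk: "gC g x (k x) (?N v) = 0" for v
    proof -
      have "gC g x (nablaC g (\<lambda>z. v) k x) (k x) + gC g x (k x) (nablaC g (\<lambda>z. v) k x) = 0"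
        by (rule compat_field[OF PR x]) (use kd[OF x] kgen in auto)
      then have "gC g x (?N v) (k x) + gC g x (k x) (?N v) = 0" by (simp add: nabla_Nk)
      then show ?thesis using gC_sym[OF PR x, of "?N v" "k x"] by simp
    qed
    have Pk: "PhiC g x (k x) v = 0" for v by (rule phik_zero[OF PR x m])
    (* trace-free: Phi(n,n) = 0 *)
    have Pnn: "PhiC g x n n = 0"
    proof -
      have gi: "complex_of_real (ginv g x a b) = k x a * l b + l a * k x b - 2 * n a * n b" for a b
        by (rule frame_ginv[OF frame_H[OF PR x fr]]) (rule ginv_right[OF PR x])
      have "0 = complex_of_real (\<Sum>a\<in>UNIV. \<Sum>b\<in>UNIV. ginv g x a b * Phi g x a b)"
        using Phi_trace[OF PR x] by simp
      also have "\<dots> = (\<Sum>a\<in>UNIV. \<Sum>b\<in>UNIV. (k x a * l b + l a * k x b - 2 * n a * n b) * of_real (Phi g x a b))"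
        by (simp add: gi[symmetric])
      also have "\<dots> = PhiC g x (k x) l + PhiC g x l (k x) - 2 * PhiC g x n n"
        unfolding PhiC_bil by (rule trace_alg)
      finally show ?thesis using Pk[of l] PhiC_sym[OF PR x, of l "k x"] by simp
    qed
    have Tsym: "PhiC g x u (?N v) = PhiC g x v (?N u)" for u v
    proof -
      let ?T = "\<lambda>c b. \<Sum>e\<in>UNIV. of_real (Phi g x c e) * Dk g k x b e"
      have Ts: "?T c b = ?T b c" for c b
        by (rule T_sym[OF PR x kd]) (use assms(3,4) x in auto)
      have "PhiC g x u (?N v) = (\<Sum>c\<in>UNIV. \<Sum>b\<in>UNIV. u c * v b * ?T c b)"
        unfolding PhiC_bil Nk_def by (rule T_alg)
      also have "\<dots> = (\<Sum>b\<in>UNIV. \<Sum>c\<in>UNIV. u c * v b * ?T c b)" by (rule sum.swap)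
      also have "\<dots> = (\<Sum>b\<in>UNIV. \<Sum>c\<in>UNIV. v b * u c * ?T b c)" using Ts by (simp add: mult_ac)
      also have "\<dots> = PhiC g x v (?N u)"
        unfolding PhiC_bil Nk_def by (rule T_alg[symmetric])
      finally show ?thesis .
    qed
    have PN: "PhiC g x u (?N v) = (-2 * gC g x (?N v) n) * PhiC g x u n" for u v
    proof -
      have "PhiC g x u (?N v) = PhiC g x u (\<lambda>i. gC g x (?N v) l * k x i + gC g x (?N v) (k x) * l i + (-2 * gC g x (?N v) n) * n i)"
        using arg_cong[OF frame_expand[OF PR x fr, of "?N v"], of "PhiC g x u"] .
      also have "\<dots> = gC g x (?N v) l * PhiC g x u (k x) + gC g x (?N v) (k x) * PhiC g x u l + (-2 * gC g x (?N v) n) * PhiC g x u n"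
        unfolding PhiC_bil bil_lin3_right ..
      also have "\<dots> = (-2 * gC g x (?N v) n) * PhiC g x u n"
        using Pk[of u] PhiC_sym[OF PR x, of u "k x"] kNk[of v] gC_sym[OF PR x, of "?N v" "k x"] by simp
      finally show ?thesis .
    qed
    have g1: "gC g x (?N (k x)) n = 0"
    proof -
      have "PhiC g x l (?N (k x)) = PhiC g x (k x) (?N l)" by (rule Tsym)
      then have "(-2 * gC g x (?N (k x)) n) * PhiC g x l n = 0" using PN[of l "k x"] Pk[of "?N l"] by simp
      then show ?thesis using p3 by simp
    qed
    have g2: "gC g x (?N n) n = 0"
    proof -
      have "PhiC g x l (?N n) = PhiC g x n (?N l)" by (rule Tsym)
      then have "(-2 * gC g x (?N n) n) * PhiC g x l n = 0" using PN[of l n] PN[of n l] Pnn by simp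
      then show ?thesis using p3 by simp
    qed
    define \<alpha> where "\<alpha> = gC g x (X x) l"
    define \<gamma> where "\<gamma> = -2 * gC g x (X x) n"
    have Xe: "X x = (\<lambda>i. \<alpha> * k x i + 0 * l i + \<gamma> * n i)"
      using frame_expand[OF PR x fr, of "X x"] Xperp unfolding \<alpha>_def \<gamma>_def by simp
    have NX: "?N (X x) = (\<lambda>j. \<alpha> * ?N (k x) j + 0 * ?N l j + \<gamma> * ?N n j)"
      by (subst Xe) (rule Nk_lin3)
    have nNX: "gC g x n (?N (X x)) = 0"
    proof -
      have "gC g x n (?N (X x)) = \<alpha> * gC g x n (?N (k x)) + 0 * gC g x n (?N l) + \<gamma> * gC g x n (?N n)"
        unfolding NX gC_bil bil_lin3_right ..
      then show ?thesis using g1 g2 gC_sym[OF PR x, of n "?N (k x)"] gC_sym[OF PR x, of n "?N n"] by simp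
    qed
    have YNX: "gC g x (Y x) (?N (X x)) = 0"
    proof -
      have Ye: "Y x = (\<lambda>i. gC g x (Y x) l * k x i + 0 * l i + (-2 * gC g x (Y x) n) * n i)"
        using frame_expand[OF PR x fr, of "Y x"] Yperp[OF x] by simp
      have "gC g x (Y x) (?N (X x)) = gC g x (\<lambda>i. gC g x (Y x) l * k x i + 0 * l i + (-2 * gC g x (Y x) n) * n i) (?N (X x))"
        using arg_cong[OF Ye, of "\<lambda>w. gC g x w (?N (X x))"] .
      also have "\<dots> = gC g x (Y x) l * gC g x (k x) (?N (X x)) + 0 * gC g x l (?N (X x)) + (-2 * gC g x (Y x) n) * gC g x n (?N (X x))"
        unfolding gC_bil bil_lin3_left ..
      also have "\<dots> = 0" using kNk nNX by simp
      finally show ?thesis .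
    qed
    have "gC g x (nablaC g X Y x) (k x) + gC g x (Y x) (nablaC g X k x) = 0"
      by (rule compat_field[OF PR x Yd]) (use kd[OF x] Yperp in auto)
    then have "gC g x (nablaC g X Y x) (k x) = 0" using YNX by (simp add: nabla_Nk)
    then show "gC g x (nablaC g X Y x) (Z x) = 0"
      unfolding Zx gC_bil bil_scale_right by (simp add: gC_bil)
  qed
qed

end
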